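(* Let $V=\{t_0^2t_2=t_1^2t_3\}\setminus\{t_0=t_1=0\}\subseteq\mathbb P^3_{\mathbb Q}$ and $c_{V,\mathbb Q}=c_{\mathbb P^1,\mathbb Q}(Z_{\mathbb Q}(\mathbb P^1,3)+1)$. Then as $B\to\infty$, $$\#\{(\mathbf x,\mathbf y)\in V(\mathbb Q)^2: H_{\mathbb Q}(\mathbf x)H_{\mathbb Q}(\mathbf y)\le B\}\sim 2c_{V,\mathbb Q}^2\,B^2\log B .$$
   Context: $H_{\mathbb Q}(x_0:\dots:x_3)=\max_i|x_i|$ for coprime integers $x_i$. $Z_{\mathbb Q}(\mathbb P^1,s)=\sum_{\mathbf x\in\mathbb P^1(\mathbb Q)}H_{\mathbb Q}(\mathbf x)^{-s}$, and $c_{\mathbb P^1,\mathbb Q}=\frac{2}{\zeta(2)}$ is the constant with $\#\{\mathbf x\in\mathbb P^1(\mathbb Q):H_{\mathbb Q}(\mathbf x)\le B\}\sim c_{\mathbb P^1,\mathbb Q}B^2$. *)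

theory Defs
  imports "HOL-Analysis.Analysis" "HOL-Library.Landau_Symbols"
begin

type_synonym vec4 = "int \<times> int \<times> int \<times> int"

(* Projective points are represented as the set {v, -v} of the two primitive
   integer representatives. *)

definition neg4 :: "vec4 \<Rightarrow> vec4" where
  "neg4 v = (case v of (a,b,c,d) \<Rightarrow> (-a,-b,-c,-d))"

definition primitive4 :: "vec4 \<Rightarrow> bool" where
  "primitive4 v = (case v of (a,b,c,d) \<Rightarrow> Gcd {a,b,c,d} = (1::int))"

definition hgt4 :: "vec4 \<Rightarrow> real" where
  "hgt4 v = (case v of (a,b,c,d) \<Rightarrow> real_of_int (max (max \<bar>a\<bar> \<bar>b\<bar>) (max \<bar>c\<bar> \<bar>d\<bar>)))"

definition H3 :: "vec4 set \<Rightarrow> real" where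
  "H3 P = Max (hgt4 ` P)"

definition V_Q :: "vec4 set set" where
  "V_Q = {{v, neg4 v} | v. primitive4 v \<and>
     (case v of (x0,x1,x2,x3) \<Rightarrow> x0^2 * x2 = x1^2 * x3 \<and> \<not> (x0 = 0 \<and> x1 = 0))}"

definition P1_Q :: "(int \<times> int) set set" where
  "P1_Q = {{(a,b), (-a,-b)} | a b. coprime a b}"

definition H1 :: "(int \<times> int) set \<Rightarrow> real" where
  "H1 P = Max ((\<lambda>(a,b). real_of_int (max \<bar>a\<bar> \<bar>b\<bar>)) ` P)"

definition Z_P1 :: "real \<Rightarrow> real" where
  "Z_P1 s = infsum (\<lambda>P. H1 P powr (-s)) P1_Q"

definition zeta2 :: real where
  "zeta2 = (\<Sum>n. 1 / (real (Suc n))^2)"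

definition c_P1 :: real where
  "c_P1 = 2 / zeta2"

definition c_V :: real where
  "c_V = c_P1 * (Z_P1 3 + 1)"

definition count_pairs :: "real \<Rightarrow> nat" where
  "count_pairs B = card {(P, Q). P \<in> V_Q \<and> Q \<in> V_Q \<and> H3 P * H3 Q \<le> B}"

end

theory Submission
  imports Defs "HOL-Computational_Algebra.Squarefree" "HOL-Real_Asymp.Real_Asymp"
begin


lemma sum_by_parts:
  fixes A g :: "nat \<Rightarrow> real"
  assumes "A 0 = 0"
  shows "(\<Sum>k=1..N. (A k - A (k-1)) * g k) = A N * g N + (\<Sum>k<N. A k * (g k - g (Suc k)))"
proof (induction N)
  case 0 then show ?case using assms by simp
next
  case (Suc N)
  have "(\<Sum>k=1..Suc N. (A k - A (k-1)) * g k) = (\<Sum>k=1..N. (A k - A (k-1)) * g k) + (A (Suc N) - A N) * g (Suc N)"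
    by simp
  also have "\<dots> = A (Suc N) * g (Suc N) + (\<Sum>k<Suc N. A k * (g k - g (Suc k)))"
    using Suc by (simp add: algebra_simps)
  finally show ?case .
qed

lemma cesaro_ratio:
  fixes t u :: "nat \<Rightarrow> real"
  assumes u: "\<And>k. u k > 0" and lim: "(\<lambda>k. t k / u k) \<longlonglongrightarrow> L"
    and dv: "filterlim (\<lambda>N. \<Sum>k<N. u k) at_top sequentially"
  shows "(\<lambda>N. (\<Sum>k<N. t k) / (\<Sum>k<N. u k)) \<longlonglongrightarrow> L"
proof (rule LIMSEQ_I)
  fix r :: real assume r: "r > 0"
  have "\<forall>\<^sub>F k in sequentially. dist (t k / u k) L < r/2"
    using lim r unfolding tendsto_iff by (meson half_gt_zero)
  then obtain K where K: "\<And>k. k \<ge> K \<Longrightarrow> \<bar>t k / u k - L\<bar> < r/2"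
    by (auto simp: eventually_sequentially dist_real_def)
  have K': "\<bar>t k - L * u k\<bar> \<le> r/2 * u k" if "k \<ge> K" for k
  proof -
    have "\<bar>t k - L * u k\<bar> = \<bar>t k / u k - L\<bar> * u k"
      using u[of k] by (simp add: field_simps abs_mult)
    also have "\<dots> \<le> r/2 * u k" using K[OF that] u[of k] by (intro mult_right_mono) auto
    finally show ?thesis .
  qed
  define C where "C = (\<Sum>k<K. \<bar>t k - L * u k\<bar>)"
  have "\<forall>\<^sub>F N in sequentially. (\<Sum>k<N. u k) \<ge> 2 * C / r + 1"
    using dv by (simp add: filterlim_at_top)
  then obtain N0 where N0: "\<And>N. N \<ge> N0 \<Longrightarrow> (\<Sum>k<N. u k) \<ge> 2 * C / r + 1"
    by (auto simp: eventually_sequentially)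
  have C0: "C \<ge> 0" unfolding C_def by (intro sum_nonneg) auto
  show "\<exists>no. \<forall>n\<ge>no. norm ((\<Sum>k<n. t k) / (\<Sum>k<n. u k) - L) < r"
  proof (intro exI allI impI)
    fix N assume N: "N \<ge> max N0 K"
    define U where "U = (\<Sum>k<N. u k)"
    have U: "U \<ge> 2 * C / r + 1" using N0[of N] N by (simp add: U_def)
    have Upos: "U > 0" proof -
      have "2 * C / r \<ge> 0" using C0 r by simp
      thus ?thesis using U by linarith
    qed
    have split: "{..<N} = {..<K} \<union> {K..<N}" using N by auto
    have "\<bar>(\<Sum>k<N. t k) - L * U\<bar> = \<bar>\<Sum>k<N. (t k - L * u k)\<bar>"
      by (simp add: U_def sum_subtractf sum_distrib_left)
    also have "\<dots> \<le> (\<Sum>k<N. \<bar>t k - L * u k\<bar>)" by (rule sum_abs)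
    also have "\<dots> = C + (\<Sum>k\<in>{K..<N}. \<bar>t k - L * u k\<bar>)"
      unfolding C_def split by (subst sum.union_disjoint) auto
    also have "(\<Sum>k\<in>{K..<N}. \<bar>t k - L * u k\<bar>) \<le> (\<Sum>k\<in>{K..<N}. r/2 * u k)"
      by (intro sum_mono K') auto
    also have "\<dots> \<le> (\<Sum>k<N. r/2 * u k)"
      by (rule sum_mono2) (use u r in \<open>auto intro: less_imp_le\<close>)
    also have "\<dots> = r/2 * U" by (simp add: U_def sum_distrib_left)
    finally have est: "\<bar>(\<Sum>k<N. t k) - L * U\<bar> \<le> C + r/2 * U" by simp
    have "C < r/2 * U"
    proof -
      have "2 * C / r < U" using U by linarith
      then show ?thesis using r by (simp add: field_simps)
    qed
    with est have "\<bar>(\<Sum>k<N. t k) - L * U\<bar> < r * U" by linarith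
    hence "\<bar>(\<Sum>k<N. t k) / U - L\<bar> < r"
    proof -
      have "(\<Sum>k<N. t k) / U - L = ((\<Sum>k<N. t k) - L * U) / U" using Upos by (simp add: field_simps)
      hence "\<bar>(\<Sum>k<N. t k) / U - L\<bar> = \<bar>(\<Sum>k<N. t k) - L * U\<bar> / U" using Upos by simp
      thus ?thesis using \<open>\<bar>(\<Sum>k<N. t k) - L * U\<bar> < r * U\<close> Upos by (simp add: divide_less_eq)
    qed
    thus "norm ((\<Sum>k<N. t k) / (\<Sum>k<N. u k) - L) < r" by (simp add: U_def)
  qed
qed

lemma harm_ln: "(\<lambda>N. harm N / ln (real N)) \<longlonglongrightarrow> (1::real)"
proof -
  have "(\<lambda>N. (harm N - ln (real N)) / ln (real N) + 1) \<longlonglongrightarrow> 0 * 0 + (1::real)"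
  proof (intro tendsto_add tendsto_const)
    have "(\<lambda>N. (harm N - ln (real N)) * inverse (ln (real N))) \<longlonglongrightarrow> euler_mascheroni * 0"
      by (intro tendsto_mult euler_mascheroni_LIMSEQ) real_asymp
    thus "(\<lambda>N. (harm N - ln (real N)) / ln (real N)) \<longlonglongrightarrow> 0 * 0"
      by (simp add: divide_inverse)
  qed
  moreover have "\<forall>\<^sub>F N in sequentially. (harm N - ln (real N)) / ln (real N) + 1 = harm N / ln (real N)"
    using eventually_gt_at_top[of 2]
  proof eventually_elim
    case (elim N)
    hence "ln (real N) > 0" by simp
    thus ?case by (simp add: field_simps)
  qed
  ultimately show ?thesis by (simp add: tendsto_cong)
qed

lemma inv_sq_diff: "(x::real) > 0 \<Longrightarrow> 1/x^2 - 1/(x+1)^2 = (2*x+1)/(x^2*(x+1)^2)"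
  by (simp add: divide_simps) (simp add: power2_eq_square algebra_simps)

lemma inv_sq_aux: "(x::real) > 0 \<Longrightarrow> A * ((2*x+1)/(x^2*(x+1)^2)) * (x+1) = A / x^2 * ((2*x+1)/(x+1))"
  by (simp add: divide_simps) (simp add: power2_eq_square algebra_simps)

lemma S1_lemma:
  fixes a :: "nat \<Rightarrow> nat" and c :: real
  assumes lim: "(\<lambda>n. real (\<Sum>k=1..n. a k) / real n ^ 2) \<longlonglongrightarrow> c"
  shows "(\<lambda>N. (\<Sum>k=1..N. real (a k) / real k ^ 2) / ln (real N)) \<longlonglongrightarrow> 2 * c"
proof -
  define Ar where "Ar k = real (\<Sum>j=1..k. a j)" for k
  have Ar0: "Ar 0 = 0" by (simp add: Ar_def)
  have aAr: "real (a k) = Ar k - Ar (k - 1)" if "k \<ge> 1" for k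
  proof -
    have "{1..k} = insert k {1..k-1}" using that by auto
    moreover have "k \<notin> {1..k-1}" using that by auto
    ultimately show ?thesis unfolding Ar_def by (simp add: sum.insert)
  qed
  define t where "t k = Ar k * (1 / real k ^ 2 - 1 / real (Suc k) ^ 2)" for k
  define u where "u k = 1 / real (Suc k)" for k :: nat
  have sumeq: "(\<Sum>k=1..N. real (a k) / real k ^ 2) = Ar N / real N ^ 2 + (\<Sum>k<N. t k)" for N
  proof -
    have "(\<Sum>k=1..N. real (a k) / real k ^ 2) = (\<Sum>k=1..N. (Ar k - Ar (k - 1)) * (1 / real k ^ 2))"
      by (intro sum.cong refl) (simp add: aAr)
    also have "\<dots> = Ar N * (1 / real N ^ 2) + (\<Sum>k<N. Ar k * (1 / real k ^ 2 - 1 / real (Suc k) ^ 2))"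
      by (rule sum_by_parts[where A=Ar, OF Ar0])
    finally show ?thesis by (simp add: t_def)
  qed
  have lim': "(\<lambda>k. Ar k / real k ^ 2) \<longlonglongrightarrow> c" using lim by (simp add: Ar_def)
  have tu: "(\<lambda>k. t k / u k) \<longlonglongrightarrow> 2 * c"
  proof -
    have "(\<lambda>k. Ar k / real k ^ 2 * ((2 * real k + 1) / (real k + 1))) \<longlonglongrightarrow> c * 2"
      by (intro tendsto_mult lim') real_asymp
    moreover have "\<forall>\<^sub>F k in sequentially. Ar k / real k ^ 2 * ((2 * real k + 1) / (real k + 1)) = t k / u k"
      using eventually_gt_at_top[of 0]
    proof eventually_elim
      case (elim k)
      have k: "real k > 0" using elim by simp
      have e1: "1/real k^2 - 1/real (Suc k)^2 = (2*real k+1)/(real k^2*(real k+1)^2)"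
        using inv_sq_diff[OF k] by (simp add: of_nat_Suc add.commute)
      have "t k / u k = Ar k * ((2*real k+1)/(real k^2*(real k+1)^2)) * (real k + 1)"
        unfolding t_def u_def e1 by (simp add: of_nat_Suc add.commute)
      also have "\<dots> = Ar k / real k ^ 2 * ((2 * real k + 1) / (real k + 1))"
        by (rule inv_sq_aux[OF k])
      finally show ?case by simp
    qed
    ultimately show ?thesis by (simp add: tendsto_cong mult.commute)
  qed
  have hu: "(\<Sum>k<N. u k) = harm N" for N by (simp add: u_def harm_altdef inverse_eq_divide)
  have st: "(\<lambda>N. (\<Sum>k<N. t k) / harm N) \<longlonglongrightarrow> 2 * c"
  proof -
    have "\<And>k. u k > 0" by (simp add: u_def)
    from cesaro_ratio[OF this tu] harm_at_top show ?thesis unfolding hu by simp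
  qed
  have st2: "(\<lambda>N. (\<Sum>k<N. t k) / harm N * (harm N / ln (real N))) \<longlonglongrightarrow> 2 * c * 1"
    by (intro tendsto_mult st harm_ln)
  have "(\<lambda>N. Ar N / real N ^ 2 * inverse (ln (real N)) + (\<Sum>k<N. t k) / harm N * (harm N / ln (real N))) \<longlonglongrightarrow> c * 0 + 2 * c * 1"
    by (intro tendsto_add tendsto_mult lim' st2) real_asymp
  moreover have "\<forall>\<^sub>F N in sequentially. Ar N / real N ^ 2 * inverse (ln (real N)) + (\<Sum>k<N. t k) / harm N * (harm N / ln (real N))
     = (\<Sum>k=1..N. real (a k) / real k ^ 2) / ln (real N)"
    using eventually_gt_at_top[of 1]
  proof eventually_elim
    case (elim N)
    hence "harm N \<noteq> (0::real)" using harm_pos[of N] by (simp add: less_imp_neq[symmetric])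
    moreover have "ln (real N) > 0" using elim by simp
    ultimately show ?case unfolding sumeq by (simp add: field_simps)
  qed
  ultimately show ?thesis by (simp add: tendsto_cong)
qed

lemma div_bounds:
  assumes "k > 0"
  shows "real (N div k) \<le> real N / real k" "real N / real k - 1 \<le> real (N div k)"
proof -
  have e: "real N = real (N div k) * real k + real (N mod k)"
    by (metis div_mult_mod_eq of_nat_add of_nat_mult)
  have m: "real (N mod k) < real k" using assms by simp
  have kp: "real k > 0" using assms by simp
  have "real N / real k = real (N div k) + real (N mod k) / real k"
    using kp by (subst e) (simp add: field_simps)
  moreover have "real (N mod k) / real k < 1" using m kp by simp
  moreover have "real (N mod k) / real k \<ge> 0" by simp
  ultimately show "real (N div k) \<le> real N / real k" "real N / real k - 1 \<le> real (N div k)"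
    by linarith+
qed

lemma a_diff:
  fixes a :: "nat \<Rightarrow> nat"
  assumes "k \<ge> 1"
  shows "real (a k) = real (\<Sum>j=1..k. a j) - real (\<Sum>j=1..k-1. a j)"
proof -
  have "{1..k} = insert k {1..k-1}" using assms by auto
  moreover have "k \<notin> {1..k-1}" using assms by auto
  ultimately show ?thesis by (simp add: sum.insert)
qed

lemma sq_aux2: "(x::real) > 0 \<Longrightarrow> C * x^2 / (x*(x+1)) = C * (x/(x+1))"
  by (simp add: divide_simps) (simp add: power2_eq_square algebra_simps)

lemma conv_main:
  fixes a :: "nat \<Rightarrow> nat" and c :: real
  assumes lim: "(\<lambda>n. real (\<Sum>k=1..n. a k) / real n ^ 2) \<longlonglongrightarrow> c" and c: "c > 0"
  shows "(\<lambda>N. real (\<Sum>k=1..N. a k * (\<Sum>j=1..N div k. a j)) / (real N ^ 2 * ln (real N))) \<longlonglongrightarrow> 2 * c^2"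
proof -
  define Ar where "Ar k = real (\<Sum>j=1..k. a j)" for k
  define S where "S N = (\<Sum>k=1..N. real (a k) / real k ^ 2)" for N
  define S2 where "S2 N = (\<Sum>k=1..N. real (a k) / real k)" for N
  have lim': "(\<lambda>k. Ar k / real k ^ 2) \<longlonglongrightarrow> c" using lim by (simp add: Ar_def)
  have Ar0: "Ar 0 = 0" by (simp add: Ar_def)
  have Arnn: "Ar k \<ge> 0" for k unfolding Ar_def by (rule of_nat_0_le_iff)
  have Armono: "Ar m \<le> Ar n" if "m \<le> n" for m n
    unfolding Ar_def of_nat_le_iff by (rule sum_mono2) (use that in auto)
  have aAr: "real (a k) = Ar k - Ar (k - 1)" if "k \<ge> 1" for k
    unfolding Ar_def by (rule a_diff[OF that])
  have SA: "(\<Sum>k=1..N. real (a k)) = Ar N" for N by (simp add: Ar_def)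
  have S1: "(\<lambda>N. S N / ln (real N)) \<longlonglongrightarrow> 2 * c"
    unfolding S_def by (rule S1_lemma[OF lim])
  obtain C where C: "\<And>k. Ar k \<le> C * real k ^ 2" and C0: "C \<ge> 0"
  proof -
    have "Bseq (\<lambda>k. Ar k / real k ^ 2)" using lim' by (rule convergent_imp_Bseq[OF convergentI])
    then obtain K where K: "\<And>k. norm (Ar k / real k ^ 2) \<le> K" "K > 0" by (auto simp: Bseq_def)
    have "Ar k \<le> K * real k ^ 2" for k
    proof (cases "k = 0")
      case True then show ?thesis using Ar0 by simp
    next
      case False
      hence kp: "real k ^ 2 > 0" by simp
      have "Ar k / real k ^ 2 \<le> K" using K(1)[of k] Arnn[of k] by simp
      thus ?thesis using kp by (simp add: divide_le_eq)
    qed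
    thus thesis using that[of K] K(2) by simp
  qed
  have S2b: "S2 N \<le> 2 * C * real N" for N
  proof -
    have "S2 N = (\<Sum>k=1..N. (Ar k - Ar (k-1)) * (1 / real k))"
      unfolding S2_def by (intro sum.cong refl) (simp add: aAr)
    also have "\<dots> = Ar N * (1 / real N) + (\<Sum>k<N. Ar k * (1 / real k - 1 / real (Suc k)))"
      by (rule sum_by_parts[where A = Ar, OF Ar0])
    also have "Ar N * (1 / real N) \<le> C * real N"
    proof (cases "N = 0")
      case True then show ?thesis using Ar0 by simp
    next
      case False
      hence "real N > 0" by simp
      moreover have "Ar N \<le> C * real N * real N" using C[of N] by (simp add: power2_eq_square)
      ultimately show ?thesis by (simp add: divide_le_eq)
    qed
    also have "(\<Sum>k<N. Ar k * (1 / real k - 1 / real (Suc k))) \<le> (\<Sum>k<N. C)"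
    proof (intro sum_mono)
      fix k assume "k \<in> {..<N}"
      show "Ar k * (1 / real k - 1 / real (Suc k)) \<le> C"
      proof (cases "k = 0")
        case True then show ?thesis using Ar0 C0 by simp
      next
        case False
        hence kp: "real k > 0" by simp
        have e: "1 / real k - 1 / real (Suc k) = 1 / (real k * (real k + 1))"
          using kp by (simp add: field_simps of_nat_Suc)
        have "Ar k * (1 / real k - 1 / real (Suc k)) = Ar k / (real k * (real k + 1))"
          unfolding e by simp
        also have "\<dots> \<le> C * real k ^ 2 / (real k * (real k + 1))"
          using kp by (intro divide_right_mono C) simp
        also have "\<dots> = C * (real k / (real k + 1))"
          using kp by (rule sq_aux2)
        also have "\<dots> \<le> C * 1"
          using kp C0 by (intro mult_left_mono) auto
        finally show ?thesis by simp
      qed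
    qed
    finally show ?thesis by simp
  qed
  define T where "T N = real (\<Sum>k=1..N. a k * (\<Sum>j=1..N div k. a j))" for N
  have Teq: "T N = (\<Sum>k=1..N. real (a k) * Ar (N div k))" for N
    by (simp add: T_def Ar_def)
  show ?thesis
  proof (rule LIMSEQ_I)
    fix r :: real assume r: "r > 0"
    define e where "e = min c (r / (2 * c + 2))"
    have e0: "e > 0" using c r by (simp add: e_def)
    have ec: "e \<le> c" by (simp add: e_def)
    have er: "2 * c * e < r"
    proof -
      have "e \<le> r / (2 * c + 2)" by (simp add: e_def)
      hence "2 * c * e \<le> 2 * c * (r / (2 * c + 2))" using c by (intro mult_left_mono) auto
      also have "\<dots> = r * (2 * c / (2 * c + 2))" by simp
      also have "\<dots> < r * 1" using c r by (intro mult_strict_left_mono) auto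
      finally show ?thesis by simp
    qed
    have ev: "\<forall>\<^sub>F m in sequentially. \<bar>Ar m / real m ^ 2 - c\<bar> < e"
      using lim' e0 unfolding tendsto_iff dist_real_def by blast
    then obtain M where M: "\<And>m. m \<ge> M \<Longrightarrow> \<bar>Ar m / real m ^ 2 - c\<bar> < e"
      by (auto simp: eventually_sequentially)
    define M1 where "M1 = max M 1"
    have M1: "(c - e) * real m ^ 2 \<le> Ar m \<and> Ar m \<le> (c + e) * real m ^ 2" if "m \<ge> M1" for m
    proof -
      have mp: "real m ^ 2 > 0" using that by (simp add: M1_def)
      have "\<bar>Ar m / real m ^ 2 - c\<bar> < e" using M that by (simp add: M1_def)
      hence "c - e < Ar m / real m ^ 2" "Ar m / real m ^ 2 < c + e" by linarith+
      thus ?thesis using mp by (simp add: field_simps less_imp_le)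
    qed
    have up_all: "Ar m \<le> (c + e) * real m ^ 2 + Ar M1" for m
    proof (cases "m \<ge> M1")
      case True then show ?thesis using M1[OF True] Arnn[of M1] by linarith
    next
      case False
      hence "Ar m \<le> Ar M1" by (intro Armono) simp
      moreover have "(c + e) * real m ^ 2 \<ge> 0" using c e0 by simp
      ultimately show ?thesis by linarith
    qed
    have lo_all: "Ar m \<ge> (c - e) * real m ^ 2 - c * real M1 ^ 2" for m
    proof (cases "m \<ge> M1")
      case True then show ?thesis using M1[OF True] c by (smt (verit) mult_nonneg_nonneg zero_le_power2)
    next
      case False
      hence "real m ^ 2 \<le> real M1 ^ 2" by (simp add: power_mono)
      hence "(c - e) * real m ^ 2 \<le> c * real M1 ^ 2"
        using ec e0 c by (smt (verit) mult_mono zero_le_power2)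
      thus ?thesis using Arnn[of m] by linarith
    qed
    have Tup: "T N \<le> (c + e) * real N ^ 2 * S N + Ar M1 * Ar N" for N
    proof -
      have "T N \<le> (\<Sum>k=1..N. real (a k) * ((c + e) * (real N / real k) ^ 2 + Ar M1))"
        unfolding Teq
      proof (intro sum_mono mult_left_mono)
        fix k assume k: "k \<in> {1..N}"
        have "Ar (N div k) \<le> (c + e) * real (N div k) ^ 2 + Ar M1" by (rule up_all)
        also have "real (N div k) ^ 2 \<le> (real N / real k) ^ 2"
          using div_bounds(1)[of k N] k by (intro power_mono) auto
        hence "(c + e) * real (N div k) ^ 2 \<le> (c + e) * (real N / real k) ^ 2"
          using c e0 by (intro mult_left_mono) auto
        finally show "Ar (N div k) \<le> (c + e) * (real N / real k) ^ 2 + Ar M1" by simp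
      qed simp
      also have "\<dots> = (\<Sum>k=1..N. (c + e) * real N ^ 2 * (real (a k) / real k ^ 2) + Ar M1 * real (a k))"
        by (intro sum.cong refl) (simp add: power_divide algebra_simps add_divide_distrib diff_divide_distrib)
      also have "\<dots> = (c + e) * real N ^ 2 * S N + Ar M1 * (\<Sum>k=1..N. real (a k))"
        unfolding S_def by (simp add: sum.distrib sum_distrib_left)
      finally show ?thesis by (simp only: SA)
    qed
    have Tlo: "T N \<ge> (c - e) * (real N ^ 2 * S N - 4 * C * real N ^ 2) - c * real M1 ^ 2 * Ar N" for N
    proof -
      have "T N \<ge> (\<Sum>k=1..N. real (a k) * ((c - e) * ((real N / real k) ^ 2 - 2 * (real N / real k)) - c * real M1 ^ 2))"
        unfolding Teq
      proof (intro sum_mono mult_left_mono)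
        fix k assume k: "k \<in> {1..N}"
        have x0: "real N / real k - 1 \<ge> 0" using k by (simp add: field_simps)
        have "(real N / real k) ^ 2 - 2 * (real N / real k) \<le> (real N / real k - 1) ^ 2"
          by (simp add: power2_eq_square algebra_simps)
        also have "\<dots> \<le> real (N div k) ^ 2"
          using div_bounds(2)[of k N] k x0 by (intro power_mono) auto
        finally have "(c - e) * ((real N / real k) ^ 2 - 2 * (real N / real k)) \<le> (c - e) * real (N div k) ^ 2"
          using ec by (intro mult_left_mono) auto
        thus "(c - e) * ((real N / real k) ^ 2 - 2 * (real N / real k)) - c * real M1 ^ 2 \<le> Ar (N div k)"
          using lo_all[of "N div k"] by linarith
      qed simp
      also have "(\<Sum>k=1..N. real (a k) * ((c - e) * ((real N / real k) ^ 2 - 2 * (real N / real k)) - c * real M1 ^ 2))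
         = (\<Sum>k=1..N. (c - e) * real N ^ 2 * (real (a k) / real k ^ 2) - (c - e) * 2 * real N * (real (a k) / real k) - c * real M1 ^ 2 * real (a k))"
        by (intro sum.cong refl) (simp add: power_divide algebra_simps add_divide_distrib diff_divide_distrib)
      also have "\<dots> = (c - e) * real N ^ 2 * S N - (c - e) * 2 * real N * S2 N - c * real M1 ^ 2 * (\<Sum>k=1..N. real (a k))"
        unfolding S_def S2_def by (simp only: sum_subtractf sum_distrib_left)
      also have "\<dots> = (c - e) * (real N ^ 2 * S N - 2 * real N * S2 N) - c * real M1 ^ 2 * (\<Sum>k=1..N. real (a k))"
        by (simp add: algebra_simps)
      finally have ge1: "(c - e) * (real N ^ 2 * S N - 2 * real N * S2 N) - c * real M1 ^ 2 * Ar N \<le> T N"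
        by (simp only: SA)
      have "(c - e) * (real N ^ 2 * S N - 2 * real N * S2 N) \<ge> (c - e) * (real N ^ 2 * S N - 4 * C * real N ^ 2)"
      proof -
        have "2 * real N * S2 N \<le> 2 * real N * (2 * C * real N)"
          using S2b[of N] by (intro mult_left_mono) auto
        thus ?thesis using ec by (intro mult_left_mono) (auto simp: power2_eq_square algebra_simps)
      qed
      with ge1 show ?thesis by linarith
    qed
    define U where "U N = (c + e) * (S N / ln (real N)) + Ar M1 * (Ar N / real N ^ 2) * inverse (ln (real N))" for N
    define L where "L N = (c - e) * (S N / ln (real N) - 4 * C * inverse (ln (real N))) - c * real M1 ^ 2 * (Ar N / real N ^ 2) * inverse (ln (real N))" for N
    have Ulim: "U \<longlonglongrightarrow> (c + e) * (2 * c) + Ar M1 * c * 0"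
      unfolding U_def by (intro tendsto_intros S1 lim') real_asymp
    have Llim: "L \<longlonglongrightarrow> (c - e) * (2 * c - 4 * C * 0) - c * real M1 ^ 2 * c * 0"
      unfolding L_def by (intro tendsto_intros S1 lim') real_asymp+
    have "(c + e) * (2 * c) + Ar M1 * c * 0 < 2 * c^2 + r" using er by (simp add: power2_eq_square algebra_simps)
    hence evU: "\<forall>\<^sub>F N in sequentially. U N < 2 * c^2 + r" using Ulim order_tendstoD(2) by blast
    have "(c - e) * (2 * c - 4 * C * 0) - c * real M1 ^ 2 * c * 0 > 2 * c^2 - r" using er by (simp add: power2_eq_square algebra_simps)
    hence evL: "\<forall>\<^sub>F N in sequentially. L N > 2 * c^2 - r" using Llim order_tendstoD(1) by blast
    have "\<forall>\<^sub>F N in sequentially. \<bar>T N / (real N ^ 2 * ln (real N)) - 2 * c^2\<bar> < r"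
      using evU evL eventually_gt_at_top[of 1]
    proof eventually_elim
      case (elim N)
      have lnp: "ln (real N) > 0" using elim by simp
      have Np: "real N ^ 2 > 0" using elim by simp
      have d: "real N ^ 2 * ln (real N) > 0" using lnp Np by simp
      have "T N / (real N ^ 2 * ln (real N)) \<le> ((c + e) * real N ^ 2 * S N + Ar M1 * Ar N) / (real N ^ 2 * ln (real N))"
        using Tup[of N] d by (intro divide_right_mono) auto
      also have "\<dots> = U N" unfolding U_def using lnp Np by (simp add: field_simps)
      finally have u: "T N / (real N ^ 2 * ln (real N)) \<le> U N" .
      have "L N = ((c - e) * (real N ^ 2 * S N - 4 * C * real N ^ 2) - c * real M1 ^ 2 * Ar N) / (real N ^ 2 * ln (real N))"
        unfolding L_def using lnp Np by (simp add: field_simps)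
      also have "\<dots> \<le> T N / (real N ^ 2 * ln (real N))"
        using Tlo[of N] d by (intro divide_right_mono) auto
      finally have l: "L N \<le> T N / (real N ^ 2 * ln (real N))" .
      show ?case using u l elim by linarith
    qed
    then obtain N0 where "\<And>N. N \<ge> N0 \<Longrightarrow> \<bar>T N / (real N ^ 2 * ln (real N)) - 2 * c^2\<bar> < r"
      by (auto simp: eventually_sequentially)
    thus "\<exists>no. \<forall>n\<ge>no. norm (real (\<Sum>k=1..n. a k * (\<Sum>j=1..n div k. a j)) / (real n ^ 2 * ln (real n)) - 2 * c^2) < r"
      by (auto simp: T_def)
  qed
qed

lemma le_nat_floor_iff: "(B::real) \<ge> 0 \<Longrightarrow> (real m \<le> B) \<longleftrightarrow> (m \<le> nat \<lfloor>B\<rfloor>)"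
  by (simp add: le_nat_iff le_floor_iff)

lemma pair_count_nat:
  fixes S :: "'a set" and f :: "'a \<Rightarrow> nat"
  assumes pos: "\<And>x. x \<in> S \<Longrightarrow> f x \<ge> 1" and fin: "\<And>n. finite {x\<in>S. f x \<le> n}"
  shows "card {x\<in>S. f x \<le> n} = (\<Sum>k=1..n. card {x\<in>S. f x = k})"
    and "card {(x,y). x\<in>S \<and> y\<in>S \<and> f x * f y \<le> N} =
           (\<Sum>k=1..N. card {x\<in>S. f x = k} * (\<Sum>j=1..N div k. card {x\<in>S. f x = j}))"
proof -
  have cardA: "card {x\<in>S. f x \<le> n} = (\<Sum>k=1..n. card {x\<in>S. f x = k})" for n
  proof -
    have "{x\<in>S. f x \<le> n} = (\<Union>k\<in>{1..n}. {x\<in>S. f x = k})" using pos by force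
    moreover have "finite {x\<in>S. f x = k}" if "k \<in> {1..n}" for k
      by (rule finite_subset[OF _ fin[of n]]) (use that in auto)
    ultimately show ?thesis by (simp only:) (intro card_UN_disjoint; auto)
  qed
  show "card {x\<in>S. f x \<le> n} = (\<Sum>k=1..n. card {x\<in>S. f x = k})" by (rule cardA)
  have "{(x,y). x\<in>S \<and> y\<in>S \<and> f x * f y \<le> N} =
        (\<Union>k\<in>{1..N}. {x\<in>S. f x = k} \<times> {y\<in>S. f y \<le> N div k})"
  proof (intro equalityI subsetI)
    fix p assume "p \<in> {(x,y). x\<in>S \<and> y\<in>S \<and> f x * f y \<le> N}"
    then obtain x y where p: "p = (x,y)" "x \<in> S" "y \<in> S" "f x * f y \<le> N" by auto
    have fx: "f x \<ge> 1" "f y \<ge> 1" using pos p by auto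
    have "f x \<le> N" using p(4) fx by (metis dual_order.trans mult_le_mono2 nat_mult_1_right)
    moreover have "f y \<le> N div f x" using p(4) fx by (simp add: less_eq_div_iff_mult_less_eq mult.commute)
    ultimately show "p \<in> (\<Union>k\<in>{1..N}. {x\<in>S. f x = k} \<times> {y\<in>S. f y \<le> N div k})"
      using p fx by auto
  next
    fix p assume "p \<in> (\<Union>k\<in>{1..N}. {x\<in>S. f x = k} \<times> {y\<in>S. f y \<le> N div k})"
    then obtain k x y where p: "p = (x,y)" "x \<in> S" "y \<in> S" "f x = k" "k \<ge> 1" "f y \<le> N div k" by auto
    hence "f y * k \<le> N" using less_eq_div_iff_mult_less_eq[of k "f y" N] by simp
    thus "p \<in> {(x,y). x\<in>S \<and> y\<in>S \<and> f x * f y \<le> N}" using p by (auto simp: mult.commute)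
  qed
  moreover have "finite ({x\<in>S. f x = k} \<times> {y\<in>S. f y \<le> N div k})" for k
  proof -
    have "finite {x\<in>S. f x = k}" by (rule finite_subset[OF _ fin[of k]]) auto
    thus ?thesis using fin by simp
  qed
  ultimately have "card {(x,y). x\<in>S \<and> y\<in>S \<and> f x * f y \<le> N} =
     (\<Sum>k=1..N. card ({x\<in>S. f x = k} \<times> {y\<in>S. f y \<le> N div k}))"
    by (simp only:) (intro card_UN_disjoint; auto)
  also have "\<dots> = (\<Sum>k=1..N. card {x\<in>S. f x = k} * (\<Sum>j=1..N div k. card {x\<in>S. f x = j}))"
    by (intro sum.cong refl) (simp add: card_cartesian_product cardA)
  finally show "card {(x,y). x\<in>S \<and> y\<in>S \<and> f x * f y \<le> N} =
           (\<Sum>k=1..N. card {x\<in>S. f x = k} * (\<Sum>j=1..N div k. card {x\<in>S. f x = j}))" .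
qed

lemma ratio_aux:
  fixes X B lX lB c T :: real
  assumes "X > 0" "lX > 0" "lB > 0" "B > 0" "c > 0"
  shows "T / (X ^ 2 * lX) * (X / B) ^ 2 * (lX / lB) / (2 * c^2) = T / (2 * c^2 * B^2 * lB)"
  using assms by (simp add: field_simps power2_eq_square)

lemma pair_count:
  fixes S :: "'a set" and f :: "'a \<Rightarrow> nat" and c :: real
  assumes pos: "\<And>x. x \<in> S \<Longrightarrow> f x \<ge> 1" and fin: "\<And>n. finite {x\<in>S. f x \<le> n}"
    and lim: "(\<lambda>n. real (card {x\<in>S. f x \<le> n}) / real n ^ 2) \<longlonglongrightarrow> c" and c: "c > 0"
  shows "(\<lambda>B. real (card {(x,y). x\<in>S \<and> y\<in>S \<and> real (f x) * real (f y) \<le> B})) \<sim>[at_top] (\<lambda>B. 2*c^2*B^2*ln B)"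
proof -
  define a where "a k = card {x\<in>S. f x = k}" for k
  define T where "T N = real (\<Sum>k=1..N. a k * (\<Sum>j=1..N div k. a j))" for N
  have lim2: "(\<lambda>n. real (\<Sum>k=1..n. a k) / real n ^ 2) \<longlonglongrightarrow> c"
    using lim by (simp only: pair_count_nat(1)[OF pos fin] a_def)
  have TL: "(\<lambda>N. T N / (real N ^ 2 * ln (real N))) \<longlonglongrightarrow> 2 * c^2"
    unfolding T_def by (rule conv_main[OF lim2 c])
  have cnt: "real (card {(x,y). x\<in>S \<and> y\<in>S \<and> real (f x) * real (f y) \<le> B}) = T (nat \<lfloor>B\<rfloor>)"
    if B: "B \<ge> 0" for B
  proof -
    have "{(x,y). x\<in>S \<and> y\<in>S \<and> real (f x) * real (f y) \<le> B} = {(x,y). x\<in>S \<and> y\<in>S \<and> f x * f y \<le> nat \<lfloor>B\<rfloor>}"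
      using le_nat_floor_iff[OF B] by (metis of_nat_mult)
    thus ?thesis unfolding T_def a_def using pair_count_nat(2)[OF pos fin] by simp
  qed
  define n where "n B = nat \<lfloor>B\<rfloor>" for B :: real
  have nlim: "filterlim n at_top at_top"
    unfolding n_def by (rule filterlim_compose[OF filterlim_nat_sequentially filterlim_floor_sequentially])
  have TL': "((\<lambda>B. T (n B) / (real (n B) ^ 2 * ln (real (n B)))) \<longlongrightarrow> 2 * c^2) at_top"
    by (rule filterlim_compose[OF TL nlim])
  have nb: "B - 1 \<le> real (n B) \<and> real (n B) \<le> B" if "B \<ge> 0" for B
    using that unfolding n_def by linarith
  have r1: "((\<lambda>B. real (n B) / B) \<longlongrightarrow> 1) at_top"
  proof (rule tendsto_sandwich[of "\<lambda>B. (B - 1) / B" _ _ "\<lambda>B. 1"])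
    show "\<forall>\<^sub>F B in at_top. (B - 1) / B \<le> real (n B) / B"
      using eventually_gt_at_top[of 0] by eventually_elim (use nb in \<open>auto intro: divide_right_mono\<close>)
    show "\<forall>\<^sub>F B in at_top. real (n B) / B \<le> 1"
      using eventually_gt_at_top[of 0] by eventually_elim (use nb in \<open>auto simp: divide_le_eq\<close>)
  qed (real_asymp, simp)
  have r2: "((\<lambda>B. ln (real (n B)) / ln B) \<longlongrightarrow> 1) at_top"
  proof (rule tendsto_sandwich[of "\<lambda>B. ln (B - 1) / ln B" _ _ "\<lambda>B. 1"])
    show "\<forall>\<^sub>F B in at_top. ln (B - 1) / ln B \<le> ln (real (n B)) / ln B"
      using eventually_gt_at_top[of 2]
    proof eventually_elim
      case (elim B)
      hence "ln (B - 1) \<le> ln (real (n B))" using nb[of B] by (subst ln_le_cancel_iff) auto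
      moreover have "ln B > 0" using elim by simp
      ultimately show ?case by (intro divide_right_mono) auto
    qed
    show "\<forall>\<^sub>F B in at_top. ln (real (n B)) / ln B \<le> 1"
      using eventually_gt_at_top[of 2]
    proof eventually_elim
      case (elim B)
      have np: "real (n B) > 0" using nb[of B] elim by auto
      hence "ln (real (n B)) \<le> ln B" using nb[of B] elim by (subst ln_le_cancel_iff) auto
      moreover have "ln B > 0" using elim by simp
      ultimately show ?case by (simp add: divide_le_eq)
    qed
  qed (real_asymp, simp)
  have prod: "((\<lambda>B. T (n B) / (real (n B) ^ 2 * ln (real (n B))) * (real (n B) / B) ^ 2 * (ln (real (n B)) / ln B) / (2 * c^2))
      \<longlongrightarrow> 2 * c^2 * 1 ^ 2 * 1 / (2 * c^2)) at_top"
    by (intro tendsto_intros TL' r1 r2) (use c in simp)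
  have "((\<lambda>B. real (card {(x,y). x\<in>S \<and> y\<in>S \<and> real (f x) * real (f y) \<le> B}) / (2*c^2*B^2*ln B)) \<longlongrightarrow> 1) at_top"
  proof -
    have one: "2 * c^2 * 1 ^ 2 * 1 / (2 * c^2) = 1" using c by simp
    have ev: "\<forall>\<^sub>F B in at_top. T (n B) / (real (n B) ^ 2 * ln (real (n B))) * (real (n B) / B) ^ 2 * (ln (real (n B)) / ln B) / (2 * c^2)
       = real (card {(x,y). x\<in>S \<and> y\<in>S \<and> real (f x) * real (f y) \<le> B}) / (2*c^2*B^2*ln B)"
      using eventually_gt_at_top[of 3]
    proof eventually_elim
      case (elim B)
      have np: "real (n B) \<ge> 2" using nb[of B] elim by auto
      hence lnn: "ln (real (n B)) > 0" by simp
      have lnB: "ln B > 0" using elim by simp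
      have cB: "real (card {(x,y). x\<in>S \<and> y\<in>S \<and> real (f x) * real (f y) \<le> B}) = T (n B)"
        using cnt[of B] elim by (simp add: n_def)
      show ?case unfolding cB by (rule ratio_aux) (use np lnn lnB elim c in auto)
    qed
    from prod show ?thesis unfolding one using tendsto_cong[OF ev] by simp
  qed
  thus ?thesis by (rule asymp_equivI')
qed



definition mu :: "nat \<Rightarrow> int" where
  "mu n = (if squarefree n then (-1) ^ card (prime_factors n) else 0)"

lemma mu_abs_le: "\<bar>mu n\<bar> \<le> 1"
  by (simp add: mu_def)

lemma mu_0 [simp]: "mu 0 = 0" by (simp add: mu_def)
lemma mu_1 [simp]: "mu 1 = 1" by (simp add: mu_def)

lemma mu_prime_mult:
  assumes p: "prime (p::nat)" and nd: "\<not> p dvd e"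
  shows "mu (p * e) = - mu e"
proof (cases "e = 0")
  case True then show ?thesis by simp
next
  case False
  have cop: "coprime p e" using p nd by (rule prime_imp_coprime)
  have sq: "squarefree (p * e) \<longleftrightarrow> squarefree e"
    using cop squarefree_mult_coprime[OF cop squarefree_prime[OF p]] squarefree_multD(2) by blast
  have pf: "prime_factors (p * e) = insert p (prime_factors e)"
    using p False by (simp add: prime_factors_product prime_prime_factors)
  have pn: "p \<notin> prime_factors e" using nd by (auto simp: in_prime_factors_iff)
  show ?thesis unfolding mu_def sq pf using pn by simp
qed

lemma mu_prime_sq:
  assumes p: "prime (p::nat)" and d: "p dvd e"
  shows "mu (p * e) = 0"
proof -
  have "p^2 dvd p * e" using d by (simp add: power2_eq_square)
  hence "\<not> squarefree (p * e)" using p by (intro not_squarefreeI) auto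
  thus ?thesis by (simp add: mu_def)
qed

lemma mu_divisor_sum:
  assumes n: "n > (1::nat)"
  shows "(\<Sum>d | d dvd n. mu d) = 0"
proof -
  obtain p where p: "prime p" "p dvd n" using prime_factor_nat[of n] n by auto
  define m where "m = n div p"
  have nm: "n = p * m" using p by (simp add: m_def)
  have m0: "m > 0" using n nm by (cases m) auto
  have fin: "finite {d. d dvd n}" using n by simp
  have split: "{d. d dvd n} = {d. d dvd n \<and> \<not> p dvd d} \<union> {d. d dvd n \<and> p dvd d}" by auto
  have "(\<Sum>d | d dvd n. mu d) = (\<Sum>d | d dvd n \<and> \<not> p dvd d. mu d) + (\<Sum>d | d dvd n \<and> p dvd d. mu d)"
    by (subst split, rule sum.union_disjoint) (use fin in auto)
  also have "{d. d dvd n \<and> p dvd d} = (\<lambda>d. p * d) ` {d. d dvd m}"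
  proof (intro equalityI subsetI)
    fix d assume d: "d \<in> {d. d dvd n \<and> p dvd d}"
    then obtain e where e: "d = p * e" by (auto elim!: dvdE)
    have "p * e dvd p * m" using d e nm by simp
    hence "e dvd m" using p by (simp add: prime_gt_0_nat)
    thus "d \<in> (\<lambda>d. p * d) ` {d. d dvd m}" using e by auto
  qed (use nm in auto)
  also have "(\<Sum>d \<in> (\<lambda>d. p * d) ` {d. d dvd m}. mu d) = (\<Sum>d | d dvd m. mu (p * d))"
    by (subst sum.reindex) (use p in \<open>auto simp: inj_on_def prime_gt_0_nat\<close>)
  also have "\<dots> = (\<Sum>d | d dvd m. if p dvd d then 0 else - mu d)"
    by (intro sum.cong refl) (use p in \<open>auto simp: mu_prime_mult mu_prime_sq\<close>)
  also have "\<dots> = - (\<Sum>d | d dvd m \<and> \<not> p dvd d. mu d)"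
  proof -
    have "(\<Sum>d | d dvd m. if p dvd d then 0 else - mu d) = (\<Sum>d \<in> {d. d dvd m \<and> \<not> p dvd d}. - mu d)"
    proof -
      have "finite {d. d dvd m}" using m0 by simp
      hence "(\<Sum>d\<in>{d\<in>{d. d dvd m}. \<not> p dvd d}. - mu d) = (\<Sum>d\<in>{d. d dvd m}. if \<not> p dvd d then - mu d else 0)"
        by (rule sum.inter_filter)
      thus ?thesis by (simp add: if_not_P cong: if_cong) (smt (verit) sum.cong)
    qed
    thus ?thesis by (simp add: sum_negf)
  qed
  also have "{d. d dvd m \<and> \<not> p dvd d} = {d. d dvd n \<and> \<not> p dvd d}"
  proof (intro equalityI subsetI)
    fix d assume d: "d \<in> {d. d dvd n \<and> \<not> p dvd d}"
    hence "coprime p d" using p by (intro prime_imp_coprime) auto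
    hence "coprime d p" by (simp add: coprime_commute)
    with d show "d \<in> {d. d dvd m \<and> \<not> p dvd d}" using nm by (auto simp: coprime_dvd_mult_right_iff)
  qed (use nm in auto)
  finally show ?thesis by simp
qed

lemma mu_divisor_sum':
  assumes n: "n > (0::nat)"
  shows "(\<Sum>d | d dvd n. mu d) = (if n = 1 then 1 else 0)"
proof (cases "n = 1")
  case True
  have "{d. d dvd (1::nat)} = {1}" by auto
  then show ?thesis using True by (simp add: mu_def)
next
  case False then show ?thesis using n mu_divisor_sum by simp
qed

lemma div_bounds_B:
  assumes "k > 0"
  shows "real (N div k) \<le> real N / real k" "real N / real k - 1 \<le> real (N div k)"
proof -
  have e: "real N = real (N div k) * real k + real (N mod k)"
    by (metis div_mult_mod_eq of_nat_add of_nat_mult)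
  have m: "real (N mod k) < real k" using assms by simp
  have kp: "real k > 0" using assms by simp
  have "real N / real k = real (N div k) + real (N mod k) / real k"
    using kp by (subst e) (simp add: field_simps)
  moreover have "real (N mod k) / real k < 1" using m kp by simp
  moreover have "real (N mod k) / real k \<ge> 0" by simp
  ultimately show "real (N div k) \<le> real N / real k" "real N / real k - 1 \<le> real (N div k)"
    by linarith+
qed

definition Qc :: "nat \<Rightarrow> nat \<Rightarrow> nat" where
  "Qc X Y = card {(g,u). g \<in> {1..X} \<and> u \<in> {1..Y} \<and> coprime g u}"

lemma card_multiples:
  assumes d: "d > (0::nat)"
  shows "card {g \<in> {1..X}. d dvd g} = X div d"
proof -
  have "{g \<in> {1..X}. d dvd g} = (\<lambda>j. d * j) ` {1..X div d}"
  proof (intro equalityI subsetI)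
    fix g assume g: "g \<in> {g \<in> {1..X}. d dvd g}"
    then obtain j where j: "g = d * j" by (auto elim!: dvdE)
    have "j \<ge> 1" using g j by (cases j) auto
    moreover have "j * d \<le> X" using g j by (simp add: mult.commute)
    hence "j \<le> X div d" using d by (simp add: less_eq_div_iff_mult_less_eq)
    ultimately show "g \<in> (\<lambda>j. d * j) ` {1..X div d}" using j by auto
  next
    fix g assume "g \<in> (\<lambda>j. d * j) ` {1..X div d}"
    then obtain j where j0: "j \<in> {1..X div d}" and j1: "g = d * j" by auto
    hence j: "g = d * j" "1 \<le> j" "j \<le> X div d" by auto
    have "j * d \<le> X" using j d by (simp add: less_eq_div_iff_mult_less_eq)
    thus "g \<in> {g \<in> {1..X}. d dvd g}" using j d by (auto simp: mult.commute)
  qed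
  moreover have "inj_on (\<lambda>j. d * j) {1..X div d}" using d by (auto simp: inj_on_def)
  ultimately show ?thesis by (simp add: card_image)
qed

lemma Qc_le: "Qc X Y \<le> X * Y"
proof -
  have "Qc X Y \<le> card ({1..X} \<times> {1..Y})" unfolding Qc_def by (intro card_mono) auto
  thus ?thesis by (simp add: card_cartesian_product)
qed

lemma Qc_mu: "int (Qc X Y) = (\<Sum>d=1..X. mu d * int (X div d) * int (Y div d))"
proof -
  define R where "R = {1..X} \<times> {1..Y}"
  have finR: "finite R" by (simp add: R_def)
  have "int (Qc X Y) = (\<Sum>x\<in>R. if coprime (fst x) (snd x) then 1 else 0)"
  proof -
    have "{(g,u). g \<in> {1..X} \<and> u \<in> {1..Y} \<and> coprime g u} = {x \<in> R. coprime (fst x) (snd x)}"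
      by (auto simp: R_def)
    moreover have "R \<inter> {x. coprime (fst x) (snd x)} = {x \<in> R. coprime (fst x) (snd x)}" by auto
    ultimately show ?thesis unfolding Qc_def using finR by (simp add: sum.If_cases)
  qed
  also have "\<dots> = (\<Sum>x\<in>R. \<Sum>d \<in> {d \<in> {1..X}. d dvd gcd (fst x) (snd x)}. mu d)"
  proof (intro sum.cong refl)
    fix x assume x: "x \<in> R"
    define g where "g = gcd (fst x) (snd x)"
    have gp: "g > 0" using x by (auto simp: R_def g_def)
    have gX: "g \<le> X" using x unfolding g_def R_def
      by (auto intro: order.trans[OF dvd_imp_le[OF gcd_dvd1]])
    have "{d \<in> {1..X}. d dvd g} = {d. d dvd g}"
      using gp gX by (auto dest: dvd_imp_le simp: dvd_pos_nat intro: Suc_leI)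
    hence "(\<Sum>d \<in> {d \<in> {1..X}. d dvd g}. mu d) = (if g = 1 then 1 else 0)"
      using mu_divisor_sum'[OF gp] by simp
    thus "(if coprime (fst x) (snd x) then 1 else 0) = (\<Sum>d \<in> {d \<in> {1..X}. d dvd gcd (fst x) (snd x)}. mu d)"
      by (simp add: g_def coprime_iff_gcd_eq_1)
  qed
  also have "\<dots> = (\<Sum>d\<in>{1..X}. \<Sum>x | x \<in> R \<and> d dvd gcd (fst x) (snd x). mu d)"
    by (rule sum.swap_restrict) (auto simp: finR)
  also have "\<dots> = (\<Sum>d=1..X. mu d * int (X div d) * int (Y div d))"
  proof (intro sum.cong refl)
    fix d assume d: "d \<in> {1..X}"
    have "{x. x \<in> R \<and> d dvd gcd (fst x) (snd x)} = {g \<in> {1..X}. d dvd g} \<times> {u \<in> {1..Y}. d dvd u}"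
      by (auto simp: R_def)
    moreover have "card {g \<in> {1..X}. d dvd g} = X div d"
      by (rule card_multiples) (use d in simp)
    moreover have "card {u \<in> {1..Y}. d dvd u} = Y div d"
      by (rule card_multiples) (use d in simp)
    ultimately have "card {x. x \<in> R \<and> d dvd gcd (fst x) (snd x)} = (X div d) * (Y div d)"
      by (simp only: card_cartesian_product)
    thus "(\<Sum>x | x \<in> R \<and> d dvd gcd (fst x) (snd x). mu d) = mu d * int (X div d) * int (Y div d)"
      by simp
  qed
  finally show ?thesis .
qed

lemma Qc_group: "X * Y = (\<Sum>d=1..X. Qc (X div d) (Y div d))"
proof -
  define R where "R = {1..X} \<times> {1..Y}"
  define C where "C d = {x \<in> R. gcd (fst x) (snd x) = d}" for d
  have "R = (\<Union>d\<in>{1..X}. C d)"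
  proof (intro equalityI subsetI)
    fix x assume x: "x \<in> R"
    define g where "g = gcd (fst x) (snd x)"
    have gp: "g > 0" using x by (auto simp: R_def g_def)
    have gX: "g \<le> X" using x unfolding g_def R_def
      by (auto intro: order.trans[OF dvd_imp_le[OF gcd_dvd1]])
    have "x \<in> C g" using x by (simp add: C_def g_def)
    moreover have "g \<in> {1..X}" using gp gX by simp
    ultimately show "x \<in> (\<Union>d\<in>{1..X}. C d)" by blast
  qed (auto simp: C_def)
  hence "card R = (\<Sum>d=1..X. card (C d))"
    by (simp only:) (intro card_UN_disjoint; auto simp: C_def R_def)
  moreover have "card R = X * Y" by (simp add: R_def card_cartesian_product)
  moreover have "card (C d) = Qc (X div d) (Y div d)" if d: "d \<in> {1..X}" for d
  proof -
    define D where "D = {(g,u). g \<in> {1..X div d} \<and> u \<in> {1..Y div d} \<and> coprime g u}"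
    have dp: "d > 0" using d by simp
    have "C d = (\<lambda>(g,u). (d * g, d * u)) ` D"
    proof (intro equalityI subsetI)
      fix x assume x: "x \<in> C d"
      obtain g u where xe: "x = (g,u)" by (cases x)
      have g: "g \<in> {1..X}" "u \<in> {1..Y}" "gcd g u = d" using x xe by (auto simp: C_def R_def)
      obtain g' where g': "g = d * g'" using g(3) by (metis gcd_dvd1 dvdE)
      obtain u' where u': "u = d * u'" using g(3) by (metis gcd_dvd2 dvdE)
      have "d * gcd g' u' = d * 1" using g(3) g' u' by (simp add: gcd_mult_distrib_nat)
      hence "gcd g' u' = 1" using dp by simp
      moreover have "g' \<ge> 1" "u' \<ge> 1" using g g' u' by (auto intro: Suc_leI simp: gr0I)
      moreover have "g' * d \<le> X" "u' * d \<le> Y" using g g' u' by (auto simp: mult.commute)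
      hence "g' \<le> X div d" "u' \<le> Y div d" using dp by (simp_all add: less_eq_div_iff_mult_less_eq)
      ultimately have "(g', u') \<in> D" by (auto simp: D_def coprime_iff_gcd_eq_1)
      thus "x \<in> (\<lambda>(g,u). (d * g, d * u)) ` D" using xe g' u' by force
    next
      fix x assume "x \<in> (\<lambda>(g,u). (d * g, d * u)) ` D"
      then obtain g' u' where x: "x = (d * g', d * u')" "g' \<in> {1..X div d}" "u' \<in> {1..Y div d}" "coprime g' u'"
        by (auto simp: D_def)
      have "g' * d \<le> X" "u' * d \<le> Y" using x dp by (simp_all add: less_eq_div_iff_mult_less_eq)
      moreover have "gcd (d * g') (d * u') = d"
        using x(4) gcd_mult_distrib_nat[of d g' u'] by (simp add: coprime_iff_gcd_eq_1)
      ultimately show "x \<in> C d" using x dp by (auto simp: C_def R_def mult.commute)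
    qed
    moreover have "inj_on (\<lambda>(g,u). (d * g, d * u)) D" using dp by (auto simp: inj_on_def)
    ultimately have "card (C d) = card D" by (simp add: card_image)
    thus ?thesis by (simp add: D_def Qc_def)
  qed
  ultimately show ?thesis by simp
qed

lemma Qc_0 [simp]: "Qc 0 Y = 0" by (simp add: Qc_def)

lemma sum_shift1: "(\<Sum>d=1..X. f d) = (\<Sum>d<X. f (Suc d))"
  by (induction X) auto

lemma summable_inv_sq: "summable (\<lambda>d. 1 / real (Suc d) ^ 2)"
proof -
  have "summable (\<lambda>n. inverse (real n ^ 2))" by (rule inverse_power_summable) simp
  hence "summable (\<lambda>n. inverse (real (Suc n) ^ 2))" by (subst summable_Suc_iff)
  thus ?thesis by (simp add: inverse_eq_divide)
qed

lemma div_ratio_bounds: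
  assumes "m > (0::nat)"
  shows "0 \<le> real (n div m) / real n" "real (n div m) / real n \<le> 1 / real m"
proof -
  show "0 \<le> real (n div m) / real n" by simp
  show "real (n div m) / real n \<le> 1 / real m"
  proof (cases "n = 0")
    case True then show ?thesis by simp
  next
    case False
    have "real (n div m) \<le> real n / real m" by (rule div_bounds_B(1)[OF assms])
    thus ?thesis using False by (simp add: divide_le_eq field_simps)
  qed
qed

lemma div_lim: assumes m: "m > (0::nat)" shows "(\<lambda>n. real (n div m) / real n) \<longlonglongrightarrow> 1 / real m"
proof (rule tendsto_sandwich[of "\<lambda>n. 1 / real m - 1 / real n" _ _ "\<lambda>n. 1 / real m"])
  show "\<forall>\<^sub>F n in sequentially. 1 / real m - 1 / real n \<le> real (n div m) / real n"
    using eventually_gt_at_top[of 0]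
  proof eventually_elim
    case (elim n)
    have "real n / real m - 1 \<le> real (n div m)" by (rule div_bounds_B(2)[OF m])
    hence "(real n / real m - 1) / real n \<le> real (n div m) / real n" using elim by (intro divide_right_mono) auto
    moreover have "(real n / real m - 1) / real n = 1 / real m - 1 / real n" using elim m by (simp add: field_simps)
    ultimately show ?case by simp
  qed
  show "\<forall>\<^sub>F n in sequentially. real (n div m) / real n \<le> 1 / real m"
    using div_ratio_bounds(2)[OF m] by simp
  show "(\<lambda>n. 1 / real m - 1 / real n) \<longlonglongrightarrow> 1 / real m" by real_asymp
qed simp

lemma div_le_aux: "p > (0::nat) \<Longrightarrow> 1 / real (p * Suc d) \<le> 1 / real (Suc d)"
proof -
  assume p: "p > 0"
  have "1 * Suc d \<le> p * Suc d" using p by (intro mult_le_mono1) simp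
  hence a: "real (Suc d) \<le> real (p * Suc d)" by (simp only: of_nat_le_iff mult_1)
  have b: "real (Suc d) > 0" by simp
  show ?thesis using a b by (intro divide_left_mono) (auto intro: mult_pos_pos order.strict_trans2)
qed

definition kappa :: real where "kappa = (\<Sum>d. real_of_int (mu (Suc d)) / real (Suc d) ^ 2)"

lemma Q_lim0:
  assumes p: "p > (0::nat)" and q: "q > (0::nat)"
  shows "(\<lambda>n. real (Qc (n div p) (n div q)) / real n ^ 2) \<longlonglongrightarrow> kappa / (real p * real q)"
proof -
  define a where "a d n = real_of_int (mu (Suc d)) * (real (n div (p * Suc d)) / real n) * (real (n div (q * Suc d)) / real n)" for d n
  define b where "b d = real_of_int (mu (Suc d)) * (1 / real (p * Suc d)) * (1 / real (q * Suc d))" for d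
  have eq: "real (Qc (n div p) (n div q)) / real n ^ 2 = (\<Sum>d. a d n)" for n
  proof -
    have "real (Qc (n div p) (n div q)) = real_of_int (int (Qc (n div p) (n div q)))" by simp
    also have "\<dots> = (\<Sum>d=1..n div p. real_of_int (mu d) * real (n div p div d) * real (n div q div d))"
      unfolding Qc_mu by simp
    finally have "real (Qc (n div p) (n div q)) / real n ^ 2 = (\<Sum>d=1..n div p. real_of_int (mu d) * real (n div p div d) * real (n div q div d)) / real n ^ 2" by simp
    also have "\<dots> = (\<Sum>d<n div p. a d n)"
      unfolding sum_shift1 sum_divide_distrib a_def
      by (intro sum.cong refl) (simp only: div_mult2_eq, simp add: power2_eq_square)
    also have "\<dots> = (\<Sum>d. a d n)"
    proof (rule suminf_finite[symmetric])
      fix d assume "d \<notin> {..<n div p}"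
      hence "\<not> Suc d \<le> n div p" by simp
      hence "\<not> Suc d * p \<le> n" using p by (simp add: less_eq_div_iff_mult_less_eq)
      hence "n div (p * Suc d) = 0" by (simp add: mult.commute)
      thus "a d n = 0" by (simp add: a_def)
    qed simp
    finally show ?thesis .
  qed
  have lim: "(\<lambda>n. a d n) \<longlonglongrightarrow> b d" for d
    unfolding a_def b_def using p q by (intro tendsto_intros div_lim) auto
  have bnd: "\<forall>\<^sub>F (d, n) in sequentially \<times>\<^sub>F sequentially. norm (a d n) \<le> 1 / real (Suc d) ^ 2"
  proof (intro always_eventually allI, clarify)
    fix d n
    have r1: "0 \<le> real (n div (p * Suc d)) / real n \<and> real (n div (p * Suc d)) / real n \<le> 1 / real (Suc d)"
    proof -
      have "real (n div (p * Suc d)) / real n \<le> 1 / real (p * Suc d)" using p by (intro div_ratio_bounds) simp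
      also have "\<dots> \<le> 1 / real (Suc d)" using p by (rule div_le_aux)
      finally show ?thesis by simp
    qed
    have r2: "0 \<le> real (n div (q * Suc d)) / real n \<and> real (n div (q * Suc d)) / real n \<le> 1 / real (Suc d)"
    proof -
      have "real (n div (q * Suc d)) / real n \<le> 1 / real (q * Suc d)" using q by (intro div_ratio_bounds) simp
      also have "\<dots> \<le> 1 / real (Suc d)" using q by (rule div_le_aux)
      finally show ?thesis by simp
    qed
    have m: "\<bar>real_of_int (mu (Suc d))\<bar> \<le> 1" using mu_abs_le[of "Suc d"] by linarith
    have "norm (a d n) = \<bar>real_of_int (mu (Suc d))\<bar> * (real (n div (p * Suc d)) / real n) * (real (n div (q * Suc d)) / real n)"
      using r1 r2 by (simp add: a_def abs_mult)
    also have "\<dots> \<le> 1 * (1 / real (Suc d)) * (1 / real (Suc d))"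
      using r1 r2 m by (intro mult_mono) auto
    also have "\<dots> = 1 / real (Suc d) ^ 2" by (simp add: power2_eq_square)
    finally show "norm (a d n) \<le> 1 / real (Suc d) ^ 2" .
  qed
  have T: "(\<forall>\<^sub>F n in sequentially. summable (\<lambda>k. norm (a k n))) \<and> summable (\<lambda>n. norm (b n)) \<and>
      ((\<lambda>n. \<Sum>k. a k n) \<longlonglongrightarrow> suminf b)"
    by (rule tannerys_theorem[OF lim bnd summable_inv_sq]) simp
  have sb: "summable b" using T summable_norm_cancel by blast
  have bk: "b d = (real_of_int (mu (Suc d)) / real (Suc d) ^ 2) / (real p * real q)" for d
    using p q by (simp add: b_def field_simps power2_eq_square)
  have sk: "summable (\<lambda>d. real_of_int (mu (Suc d)) / real (Suc d) ^ 2)"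
  proof -
    have "summable (\<lambda>d. b d * (real p * real q))" using sb by (rule summable_mult2)
    moreover have "b d * (real p * real q) = real_of_int (mu (Suc d)) / real (Suc d) ^ 2" for d
      using p q by (simp add: bk)
    ultimately show ?thesis by simp
  qed
  have "suminf b = kappa / (real p * real q)"
    unfolding bk kappa_def by (rule suminf_divide[OF sk])
  with T show ?thesis unfolding eq by simp
qed

lemma kappa_zeta: "kappa * zeta2 = 1"
proof -
  define c where "c d n = real (Qc (n div Suc d) (n div Suc d)) / real n ^ 2" for d n
  have eq: "(\<Sum>d. c d n) = 1" if n: "n > 0" for n
  proof -
    have "(\<Sum>d. c d n) = (\<Sum>d<n. c d n)"
    proof (rule suminf_finite)
      fix d assume "d \<notin> {..<n}"
      hence "n div Suc d = 0" by simp
      thus "c d n = 0" by (simp add: c_def)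
    qed simp
    also have "\<dots> = real (\<Sum>d=1..n. Qc (n div d) (n div d)) / real n ^ 2"
      unfolding sum_shift1 c_def by (simp add: sum_divide_distrib)
    also have "(\<Sum>d=1..n. Qc (n div d) (n div d)) = n * n" using Qc_group[of n n] n by simp
    finally show ?thesis using n by (simp add: power2_eq_square)
  qed
  have lim: "(\<lambda>n. c d n) \<longlonglongrightarrow> kappa / (real (Suc d) * real (Suc d))" for d
    unfolding c_def by (rule Q_lim0) auto
  have bnd: "\<forall>\<^sub>F (d, n) in sequentially \<times>\<^sub>F sequentially. norm (c d n) \<le> 1 / real (Suc d) ^ 2"
  proof (intro always_eventually allI, clarify)
    fix d n
    have r: "real (n div Suc d) / real n \<le> 1 / real (Suc d)" by (rule div_ratio_bounds) simp
    have "norm (c d n) = real (Qc (n div Suc d) (n div Suc d)) / real n ^ 2" by (simp add: c_def)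
    also have "\<dots> \<le> real ((n div Suc d) * (n div Suc d)) / real n ^ 2"
    proof (rule divide_right_mono)
      show "real (Qc (n div Suc d) (n div Suc d)) \<le> real ((n div Suc d) * (n div Suc d))"
        by (simp only: of_nat_le_iff Qc_le)
    qed simp
    also have "\<dots> = (real (n div Suc d) / real n) ^ 2" by (simp add: power2_eq_square)
    also have "\<dots> \<le> (1 / real (Suc d)) ^ 2" using r by (intro power_mono) auto
    finally show "norm (c d n) \<le> 1 / real (Suc d) ^ 2" by (simp add: power_divide)
  qed
  have T: "(\<forall>\<^sub>F n in sequentially. summable (\<lambda>k. norm (c k n))) \<and> summable (\<lambda>n. norm (kappa / (real (Suc n) * real (Suc n)))) \<and>
      ((\<lambda>n. \<Sum>k. c k n) \<longlonglongrightarrow> (\<Sum>d. kappa / (real (Suc d) * real (Suc d))))"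
    by (rule tannerys_theorem[OF lim bnd summable_inv_sq]) simp
  have "(\<Sum>d. kappa / (real (Suc d) * real (Suc d))) = kappa * zeta2"
  proof -
    have "(\<lambda>d. kappa / (real (Suc d) * real (Suc d))) = (\<lambda>d. kappa * (1 / real (Suc d) ^ 2))"
      by (simp add: power2_eq_square)
    thus ?thesis unfolding zeta2_def by (simp only:) (rule suminf_mult[OF summable_inv_sq])
  qed
  moreover have "(\<lambda>n. \<Sum>k. c k n) \<longlonglongrightarrow> 1"
  proof (rule tendsto_eventually)
    show "\<forall>\<^sub>F n in sequentially. (\<Sum>k. c k n) = 1"
      using eventually_gt_at_top[of 0] by (rule eventually_mono) (rule eq)
  qed
  ultimately show ?thesis using T LIMSEQ_unique by metis
qed

lemma zeta2_pos: "zeta2 > 0"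
proof -
  have "0 < 1 / real (Suc 0) ^ 2" by simp
  also have "\<dots> \<le> zeta2" unfolding zeta2_def
    using sum_le_suminf[OF summable_inv_sq, of "{0}"] by simp
  finally show ?thesis .
qed

lemma Q_lim:
  assumes p: "p > (0::nat)" and q: "q > (0::nat)"
  shows "(\<lambda>n. real (Qc (n div p) (n div q)) / real n ^ 2) \<longlonglongrightarrow> 1 / (zeta2 * real p * real q)"
proof -
  have k: "kappa = 1 / zeta2" using kappa_zeta zeta2_pos by (simp add: field_simps)
  show ?thesis using Q_lim0[OF p q] unfolding k by (simp add: mult.assoc)
qed



lemma card_classes:
  assumes fin: "finite X" and cl: "\<And>x. x \<in> X \<Longrightarrow> \<nu> x \<in> X"
    and inv: "\<And>x. x \<in> X \<Longrightarrow> \<nu> (\<nu> x) = x" and ne: "\<And>x. x \<in> X \<Longrightarrow> \<nu> x \<noteq> x"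
  shows "2 * card {{x, \<nu> x} | x. x \<in> X} = card X"
proof -
  define C where "C = {{x, \<nu> x} | x. x \<in> X}"
  have C: "C = (\<lambda>x. {x, \<nu> x}) ` X" by (auto simp: C_def)
  have "2 * card C = card (\<Union>C)"
  proof (rule card_partition)
    show "finite C" using fin by (simp add: C)
    show "finite (\<Union>C)" using fin cl by (auto simp: C intro: finite_subset[OF _ fin])
    show "card c = 2" if "c \<in> C" for c
    proof -
      obtain x where x: "x \<in> X" "c = {x, \<nu> x}" using \<open>c \<in> C\<close> by (auto simp: C)
      have "\<nu> x \<noteq> x" using ne x(1) by blast
      thus ?thesis using x(2) by (simp add: card_insert_if)
    qed
    show "c1 \<inter> c2 = {}" if "c1 \<in> C" "c2 \<in> C" "c1 \<noteq> c2" for c1 c2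
      using that inv cl by (auto simp: C) metis+
  qed
  moreover have "\<Union>C = X" using cl by (auto simp: C)
  ultimately show ?thesis by (simp add: C_def)
qed

definition hab :: "int \<times> int \<Rightarrow> int" where "hab x = max \<bar>fst x\<bar> \<bar>snd x\<bar>"

definition CPk :: "nat \<Rightarrow> (int \<times> int) set" where
  "CPk k = {x. coprime (fst x) (snd x) \<and> hab x = int k}"

definition CPle :: "nat \<Rightarrow> (int \<times> int) set" where
  "CPle n = {x. coprime (fst x) (snd x) \<and> hab x \<le> int n}"

definition w :: "nat \<Rightarrow> nat" where "w k = card (CPk k)"

lemma hab_pos: "coprime (fst x) (snd x) \<Longrightarrow> hab x \<ge> 1"
proof -
  assume c: "coprime (fst x) (snd x)"
  have "\<not> (fst x = 0 \<and> snd x = 0)" using c by auto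
  thus ?thesis by (auto simp: hab_def)
qed

lemma CPle_subset: "CPle n \<subseteq> {-int n..int n} \<times> {-int n..int n}"
  by (auto simp: CPle_def hab_def)

lemma finite_CPle: "finite (CPle n)"
  by (rule finite_subset[OF CPle_subset]) simp

lemma finite_CPk: "finite (CPk k)"
  by (rule finite_subset[OF _ finite_CPle[of k]]) (auto simp: CPk_def CPle_def)

lemma CPle_sum: "card (CPle n) = (\<Sum>k=1..n. w k)"
proof -
  have "CPle n = (\<Union>k\<in>{1..n}. CPk k)"
  proof (intro equalityI subsetI)
    fix x assume x: "x \<in> CPle n"
    hence "hab x \<ge> 1" using hab_pos by (auto simp: CPle_def)
    thus "x \<in> (\<Union>k\<in>{1..n}. CPk k)" using x
      by (auto simp: CPle_def CPk_def intro!: bexI[of _ "nat (hab x)"])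
  qed (auto simp: CPle_def CPk_def)
  moreover have "card (\<Union>k\<in>{1..n}. CPk k) = (\<Sum>k=1..n. card (CPk k))"
    by (rule card_UN_disjoint) (simp, simp add: finite_CPk, auto simp: CPk_def)
  ultimately show ?thesis unfolding w_def by simp
qed

lemma w_le: "w k \<le> 8 * k + 4"
proof -
  have "CPk k \<subseteq> ({-int k..int k} \<times> {-int k, int k}) \<union> ({-int k, int k} \<times> {-int k..int k})"
    by (auto simp: CPk_def hab_def max_def split: if_splits)
  hence "w k \<le> card (({-int k..int k} \<times> {-int k, int k}) \<union> ({-int k, int k} \<times> {-int k..int k}))"
    unfolding w_def by (intro card_mono) auto
  also have "\<dots> \<le> card ({-int k..int k} \<times> {-int k, int k}) + card ({-int k, int k} \<times> {-int k..int k})"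
    by (rule card_Un_le)
  also have "\<dots> \<le> (2 * k + 1) * 2 + 2 * (2 * k + 1)"
  proof -
    have c2: "card {-int k, int k} \<le> 2" by (rule card_insert_le_m1) auto
    have c1: "card {-int k..int k} = 2 * k + 1" by simp
    have "card ({-int k..int k} \<times> {-int k, int k}) = (2 * k + 1) * card {-int k, int k}"
      by (simp only: card_cartesian_product c1)
    also have "\<dots> \<le> (2 * k + 1) * 2" using c2 by (rule mult_le_mono2)
    finally have A: "card ({-int k..int k} \<times> {-int k, int k}) \<le> (2 * k + 1) * 2" .
    have "card ({-int k, int k} \<times> {-int k..int k}) = card {-int k, int k} * (2 * k + 1)"
      by (simp only: card_cartesian_product c1)
    also have "\<dots> \<le> 2 * (2 * k + 1)" using c2 by (rule mult_le_mono1)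
    finally have B: "card ({-int k, int k} \<times> {-int k..int k}) \<le> 2 * (2 * k + 1)" .
    show ?thesis using A B by (rule add_mono)
  qed
  finally show ?thesis by simp
qed

lemma Qpp_card:
  "card {x::int\<times>int. coprime (fst x) (snd x) \<and> 1 \<le> fst x \<and> fst x \<le> int X \<and> 1 \<le> snd x \<and> snd x \<le> int Y} = Qc X Y"
proof -
  have "{x::int\<times>int. coprime (fst x) (snd x) \<and> 1 \<le> fst x \<and> fst x \<le> int X \<and> 1 \<le> snd x \<and> snd x \<le> int Y}
      = (\<lambda>(g,u). (int g, int u)) ` {(g,u). g \<in> {1..X} \<and> u \<in> {1..Y} \<and> coprime g u}"
  proof (intro equalityI subsetI)
    fix x :: "int \<times> int"
    assume x: "x \<in> {x. coprime (fst x) (snd x) \<and> 1 \<le> fst x \<and> fst x \<le> int X \<and> 1 \<le> snd x \<and> snd x \<le> int Y}"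
    obtain a b where ab: "x = (a, b)" by (cases x)
    have a1: "a \<ge> 1" "b \<ge> 1" "a \<le> int X" "b \<le> int Y" "coprime a b" using x ab by auto
    have "coprime (int (nat a)) (int (nat b))" using a1 by simp
    hence "coprime (nat a) (nat b)" by (simp only: coprime_int_iff)
    hence "(nat a, nat b) \<in> {(g,u). g \<in> {1..X} \<and> u \<in> {1..Y} \<and> coprime g u}"
      using a1 by auto
    moreover have "x = (\<lambda>(g,u). (int g, int u)) (nat a, nat b)" using a1 ab by auto
    ultimately show "x \<in> (\<lambda>(g,u). (int g, int u)) ` {(g,u). g \<in> {1..X} \<and> u \<in> {1..Y} \<and> coprime g u}"
      by (rule rev_image_eqI)
  next
    fix x :: "int \<times> int"
    assume "x \<in> (\<lambda>(g,u). (int g, int u)) ` {(g,u). g \<in> {1..X} \<and> u \<in> {1..Y} \<and> coprime g u}"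
    then obtain g u where gu: "x = (int g, int u)" "g \<in> {1..X}" "u \<in> {1..Y}" "coprime g u" by auto
    have "coprime (int g) (int u)" using gu(4) by (simp only: coprime_int_iff)
    thus "x \<in> {x. coprime (fst x) (snd x) \<and> 1 \<le> fst x \<and> fst x \<le> int X \<and> 1 \<le> snd x \<and> snd x \<le> int Y}"
      using gu by auto
  qed
  moreover have "inj_on (\<lambda>(g,u). (int g, int u)) {(g,u). g \<in> {1..X} \<and> u \<in> {1..Y} \<and> coprime g u}"
    by (auto simp: inj_on_def)
  ultimately show ?thesis by (simp add: card_image Qc_def)
qed

definition QS :: "int \<Rightarrow> int \<Rightarrow> nat \<Rightarrow> nat \<Rightarrow> (int \<times> int) set" where
  "QS s t X Y = {x. coprime (fst x) (snd x) \<and> 1 \<le> s * fst x \<and> s * fst x \<le> int X \<and> 1 \<le> t * snd x \<and> t * snd x \<le> int Y}"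

lemma unit_sq: "s \<in> {1, -1} \<Longrightarrow> s * s = (1::int)" by auto

lemma coprime_units: "s \<in> {1, -1} \<Longrightarrow> t \<in> {1, -1} \<Longrightarrow> coprime (s * a) (t * b) \<longleftrightarrow> coprime a (b::int)"
  by auto

lemma QS_card:
  assumes s: "s \<in> {1, -1}" and t: "t \<in> {1, -1}"
  shows "card (QS s t X Y) = Qc X Y"
proof -
  define P where "P = {x::int\<times>int. coprime (fst x) (snd x) \<and> 1 \<le> fst x \<and> fst x \<le> int X \<and> 1 \<le> snd x \<and> snd x \<le> int Y}"
  have ss: "s * s = 1" "t * t = 1" using s t by (auto intro: unit_sq)
  have "QS s t X Y = (\<lambda>x. (s * fst x, t * snd x)) ` P"
  proof (intro equalityI subsetI)
    fix x assume x: "x \<in> QS s t X Y"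
    have "(s * fst x, t * snd x) \<in> P"
      using x coprime_units[OF s t, of "fst x" "snd x"] by (simp add: P_def QS_def)
    moreover have "x = (\<lambda>x. (s * fst x, t * snd x)) (s * fst x, t * snd x)"
      using ss by (simp add: mult.assoc[symmetric])
    ultimately show "x \<in> (\<lambda>x. (s * fst x, t * snd x)) ` P" by (rule rev_image_eqI)
  next
    fix x assume "x \<in> (\<lambda>x. (s * fst x, t * snd x)) ` P"
    then obtain y where y: "y \<in> P" "x = (s * fst y, t * snd y)" by auto
    have e1: "s * fst x = fst y" and e2: "t * snd x = snd y" using y ss by (simp_all add: mult.assoc[symmetric])
    have cp: "coprime (fst x) (snd x)" using y coprime_units[OF s t, of "fst y" "snd y"] by (simp add: P_def)
    show "x \<in> QS s t X Y" unfolding QS_def mem_Collect_eq e1 e2 using cp y(1) by (simp add: P_def)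
  qed
  moreover have "inj_on (\<lambda>x. (s * fst x, t * snd x)) P"
  proof (rule inj_onI)
    fix x y assume "(s * fst x, t * snd x) = (s * fst y, t * snd y)"
    hence "s * (s * fst x) = s * (s * fst y)" "t * (t * snd x) = t * (t * snd y)" by auto
    thus "x = y" using ss by (simp add: mult.assoc[symmetric] prod_eq_iff)
  qed
  ultimately have "card (QS s t X Y) = card P" by (simp add: card_image)
  thus ?thesis unfolding P_def Qpp_card .
qed

lemma QS_finite: "finite (QS s t X Y)"
proof (cases "s = 0 \<or> t = 0")
  case True then show ?thesis by (auto simp: QS_def)
next
  case False
  have "QS s t X Y \<subseteq> {-int X..int X} \<times> {-int Y..int Y}"
  proof
    fix x assume x: "x \<in> QS s t X Y"
    have "\<bar>fst x\<bar> \<le> \<bar>s * fst x\<bar>" using False by (simp add: abs_mult) (metis abs_ge_zero mult_le_cancel_right1 abs_not_less_zero int_one_le_iff_zero_less zero_less_abs_iff)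
    moreover have "\<bar>snd x\<bar> \<le> \<bar>t * snd x\<bar>" using False by (simp add: abs_mult) (metis abs_ge_zero mult_le_cancel_right1 abs_not_less_zero int_one_le_iff_zero_less zero_less_abs_iff)
    ultimately show "x \<in> {-int X..int X} \<times> {-int Y..int Y}" using x by (auto simp: QS_def mem_Times_iff)
  qed
  thus ?thesis by (rule finite_subset) simp
qed

lemma coprime_0_int: "coprime (0::int) b \<longleftrightarrow> \<bar>b\<bar> = 1" by simp

lemma CPle_card:
  assumes n: "n \<ge> 1"
  shows "card (CPle n) = 4 + 4 * Qc n n"
proof -
  define I where "I = ({1, -1} \<times> {1, -1} :: (int \<times> int) set)"
  define U where "U = (\<Union>st\<in>I. QS (fst st) (snd st) n n)"
  define Ax where "Ax = {(0,1), (0,-1), (1,0), (-1,0) :: int \<times> int}"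
  have "CPle n = Ax \<union> U"
  proof (intro equalityI subsetI)
    fix x assume x: "x \<in> CPle n"
    obtain a b where ab: "x = (a, b)" by (cases x)
    have c: "coprime a b" "\<bar>a\<bar> \<le> int n" "\<bar>b\<bar> \<le> int n" using x ab by (auto simp: CPle_def hab_def)
    show "x \<in> Ax \<union> U"
    proof (cases "a = 0 \<or> b = 0")
      case True
      hence "x \<in> Ax" using c ab by (auto simp: Ax_def abs_if split: if_splits)
      thus ?thesis by simp
    next
      case False
      define st where "st = (sgn a, sgn b)"
      have "st \<in> I" using False by (auto simp: st_def I_def sgn_if)
      moreover have "x \<in> QS (fst st) (snd st) n n"
      proof -
        have "sgn a * a = \<bar>a\<bar>" "sgn b * b = \<bar>b\<bar>" by (simp_all add: abs_if sgn_if)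
        moreover have "\<bar>a\<bar> \<ge> 1" "\<bar>b\<bar> \<ge> 1" using False by auto
        ultimately show ?thesis using c ab by (simp add: st_def QS_def)
      qed
      ultimately show ?thesis by (auto simp: U_def)
    qed
  next
    fix x assume x: "x \<in> Ax \<union> U"
    show "x \<in> CPle n"
    proof (cases "x \<in> Ax")
      case True thus ?thesis using n by (auto simp: Ax_def CPle_def hab_def)
    next
      case False
      with x obtain s t where st: "(s, t) \<in> I" "x \<in> QS s t n n" by (auto simp: U_def)
      have "\<bar>fst x\<bar> = s * fst x" "\<bar>snd x\<bar> = t * snd x" using st by (auto simp: I_def QS_def)
      thus ?thesis using st by (auto simp: CPle_def QS_def hab_def)
    qed
  qed
  moreover have "Ax \<inter> U = {}" by (auto simp: Ax_def U_def I_def QS_def)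
  moreover have "finite U" by (auto simp: U_def I_def QS_finite)
  moreover have "card Ax = 4" by (simp add: Ax_def)
  moreover have "finite Ax" by (simp add: Ax_def)
  moreover have "card U = 4 * Qc n n"
  proof -
    have "card U = (\<Sum>st\<in>I. card (QS (fst st) (snd st) n n))"
      unfolding U_def
    proof (rule card_UN_disjoint)
      show "finite I" by (simp add: I_def)
      show "\<forall>i\<in>I. finite (QS (fst i) (snd i) n n)" by (simp add: QS_finite)
      show "\<forall>i\<in>I. \<forall>j\<in>I. i \<noteq> j \<longrightarrow> QS (fst i) (snd i) n n \<inter> QS (fst j) (snd j) n n = {}"
        by (auto simp: I_def QS_def)
    qed
    also have "\<dots> = (\<Sum>st\<in>I. Qc n n)" by (intro sum.cong refl) (auto simp: I_def QS_card)
    also have "\<dots> = 4 * Qc n n" by (simp add: I_def)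
    finally show ?thesis .
  qed
  ultimately show ?thesis by (simp add: card_Un_disjoint)
qed

definition Fib :: "nat \<Rightarrow> nat \<Rightarrow> (int \<times> int) set" where
  "Fib n h = {x. fst x \<ge> 1 \<and> coprime (fst x) (snd x) \<and> fst x * int h \<le> int n \<and> \<bar>snd x\<bar> * int h ^ 2 \<le> int n}"

lemma mult_le_div_int:
  assumes h: "h > (0::nat)" and m: "m \<ge> (0::int)"
  shows "m * int h \<le> int n \<longleftrightarrow> m \<le> int (n div h)"
proof -
  obtain k where k: "m = int k" using m by (metis nonneg_int_cases)
  have "m * int h \<le> int n \<longleftrightarrow> k * h \<le> n" unfolding k by (metis of_nat_le_iff of_nat_mult)
  also have "\<dots> \<longleftrightarrow> k \<le> n div h" using h by (simp add: less_eq_div_iff_mult_less_eq)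
  also have "\<dots> \<longleftrightarrow> m \<le> int (n div h)" unfolding k by simp
  finally show ?thesis .
qed

lemma Fib_card:
  assumes h: "h \<ge> 1" and hn: "h \<le> n"
  shows "card (Fib n h) = 1 + 2 * Qc (n div h) (n div h ^ 2)"
proof -
  define X where "X = n div h"
  define Y where "Y = n div h ^ 2"
  have hp: "h > 0" "h ^ 2 > 0" using h by auto
  have "Fib n h = {(1, 0)} \<union> (QS 1 1 X Y \<union> QS 1 (-1) X Y)"
  proof (intro equalityI subsetI)
    fix x assume x: "x \<in> Fib n h"
    obtain g u where gu: "x = (g, u)" by (cases x)
    have c: "g \<ge> 1" "coprime g u" "g * int h \<le> int n" "\<bar>u\<bar> * int h ^ 2 \<le> int n"
      using x gu by (auto simp: Fib_def)
    have gX: "g \<le> int X" using c(3) mult_le_div_int[OF hp(1), of g n] c(1) by (simp add: X_def)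
    have uY: "\<bar>u\<bar> \<le> int Y" using c(4) mult_le_div_int[OF hp(2), of "\<bar>u\<bar>" n] by (simp add: Y_def)
    show "x \<in> {(1, 0)} \<union> (QS 1 1 X Y \<union> QS 1 (-1) X Y)"
    proof (cases "u = 0")
      case True
      hence "g = 1" using c(1,2) by simp
      thus ?thesis using True gu by simp
    next
      case False
      then show ?thesis using c gX uY gu by (auto simp: QS_def abs_if split: if_splits)
    qed
  next
    fix x assume x: "x \<in> {(1, 0)} \<union> (QS 1 1 X Y \<union> QS 1 (-1) X Y)"
    show "x \<in> Fib n h"
    proof (cases "x = (1, 0)")
      case True thus ?thesis using hn by (simp add: Fib_def)
    next
      case False
      then obtain t where t: "t \<in> {1, -1}" "x \<in> QS 1 t X Y" using x by auto
      have au: "\<bar>snd x\<bar> = t * snd x" using t by (auto simp: QS_def)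
      have "fst x * int h \<le> int n" using t mult_le_div_int[OF hp(1), of "fst x" n] by (simp add: QS_def X_def)
      moreover have "\<bar>snd x\<bar> * int h ^ 2 \<le> int n"
        using t mult_le_div_int[OF hp(2), of "\<bar>snd x\<bar>" n] au by (simp add: QS_def Y_def)
      ultimately show ?thesis using t by (simp add: Fib_def QS_def)
    qed
  qed
  moreover have "card (QS 1 1 X Y \<union> QS 1 (-1) X Y) = 2 * Qc X Y"
  proof -
    have "QS 1 1 X Y \<inter> QS 1 (-1) X Y = {}" by (auto simp: QS_def)
    hence "card (QS 1 1 X Y \<union> QS 1 (-1) X Y) = card (QS 1 1 X Y) + card (QS 1 (-1) X Y)"
      by (simp add: card_Un_disjoint QS_finite)
    thus ?thesis by (simp add: QS_card)
  qed
  moreover have "(1, 0) \<notin> QS 1 1 X Y \<union> QS 1 (-1) X Y" by (auto simp: QS_def)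
  ultimately show ?thesis by (simp add: QS_finite X_def Y_def)
qed

lemma finite_Fib: "h \<ge> 1 \<Longrightarrow> h \<le> n \<Longrightarrow> finite (Fib n h)"
  using Fib_card[of h n] by (metis card.infinite add_is_0 one_neq_zero)

definition Vvec :: "vec4 set" where
  "Vvec = {v. primitive4 v \<and> (case v of (x0,x1,x2,x3) \<Rightarrow> x0^2 * x2 = x1^2 * x3 \<and> \<not> (x0 = 0 \<and> x1 = 0))}"

definition Dom :: "((int \<times> int) \<times> (int \<times> int)) set" where
  "Dom = {((a,b),(g,u)). coprime a b \<and> g \<ge> 1 \<and> coprime g u}"

definition phi :: "(int \<times> int) \<times> (int \<times> int) \<Rightarrow> vec4" where
  "phi x = (case x of ((a,b),(g,u)) \<Rightarrow> (g*a, g*b, u*b^2, u*a^2))"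

lemma prim_iff: "primitive4 (x0,x1,x2,x3) \<longleftrightarrow> gcd x0 (gcd x1 (gcd x2 x3)) = 1"
  by (simp add: primitive4_def)

lemma phi_in:
  assumes "((a,b),(g,u)) \<in> Dom"
  shows "phi ((a,b),(g,u)) \<in> Vvec"
proof -
  have c: "coprime a b" "g \<ge> 1" "coprime g u" using assms by (auto simp: Dom_def)
  have ab: "\<not> (a = 0 \<and> b = 0)" using c(1) by auto
  have g1: "gcd (g*a) (g*b) = g" using c(1,2) gcd_mult_distrib_int[of g a b] by (simp add: coprime_iff_gcd_eq_1)
  have cab: "coprime (b^2) (a^2)" using c(1) by (simp add: coprime_commute)
  have g2: "gcd (u*b^2) (u*a^2) = \<bar>u\<bar>" using cab gcd_mult_distrib_int[of u "b^2" "a^2"] by (simp add: coprime_iff_gcd_eq_1)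
  have "gcd (g*a) (gcd (g*b) (gcd (u*b^2) (u*a^2))) = gcd (gcd (g*a) (g*b)) (gcd (u*b^2) (u*a^2))"
    by (simp add: gcd.assoc)
  also have "\<dots> = 1" unfolding g1 g2 using c(3) by (simp add: coprime_iff_gcd_eq_1)
  finally have prim: "primitive4 (g*a, g*b, u*b^2, u*a^2)" by (simp add: prim_iff)
  have eq: "(g*a)^2 * (u*b^2) = (g*b)^2 * (u*a^2)" by (simp add: algebra_simps power2_eq_square)
  have nz: "\<not> (g*a = 0 \<and> g*b = 0)" using ab c(2) by auto
  show ?thesis using prim eq nz by (simp add: Vvec_def phi_def) blast
qed

lemma phi_inj: "inj_on phi Dom"
proof (rule inj_onI)
  fix x y assume x: "x \<in> Dom" and y: "y \<in> Dom" and e: "phi x = phi y"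
  obtain a b g u where xd: "x = ((a,b),(g,u))" by (metis prod.collapse)
  obtain a' b' g' u' where yd: "y = ((a',b'),(g',u'))" by (metis prod.collapse)
  have c: "coprime a b" "g \<ge> 1" "coprime a' b'" "g' \<ge> 1" using x y xd yd by (auto simp: Dom_def)
  have e1: "g*a = g'*a'" "g*b = g'*b'" "u*b^2 = u'*b'^2" "u*a^2 = u'*a'^2" using e xd yd by (auto simp: phi_def)
  have "gcd (g*a) (g*b) = g" using c(1,2) gcd_mult_distrib_int[of g a b] by (simp add: coprime_iff_gcd_eq_1)
  moreover have "gcd (g'*a') (g'*b') = g'" using c(3,4) gcd_mult_distrib_int[of g' a' b'] by (simp add: coprime_iff_gcd_eq_1)
  ultimately have gg: "g = g'" using e1 by simp
  hence aa: "a = a'" "b = b'" using e1 c(2) by auto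
  have "\<not> (a = 0 \<and> b = 0)" using c(1) by auto
  hence "u = u'" using e1(3,4) aa by auto
  thus "x = y" using xd yd gg aa by simp
qed

lemma phi_surj:
  assumes v: "v \<in> Vvec"
  shows "v \<in> phi ` Dom"
proof -
  obtain x0 x1 x2 x3 where vd: "v = (x0,x1,x2,x3)" by (metis prod.collapse)
  have prim: "gcd x0 (gcd x1 (gcd x2 x3)) = 1" and eq: "x0^2 * x2 = x1^2 * x3" and nz: "\<not> (x0 = 0 \<and> x1 = 0)"
    using v vd by (auto simp: Vvec_def prim_iff)
  define g where "g = gcd x0 x1"
  define a where "a = x0 div g"
  define b where "b = x1 div g"
  have gp: "g \<ge> 1" using nz by (simp add: g_def) (smt (verit) gcd_eq_0_iff gcd_ge_0_int)
  have x0: "x0 = g * a" by (simp add: a_def g_def)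
  have x1: "x1 = g * b" by (simp add: b_def g_def)
  have cab: "coprime a b" using nz by (simp add: a_def b_def g_def div_gcd_coprime)
  have eq2: "a^2 * x2 = b^2 * x3"
  proof -
    have "g^2 * (a^2 * x2) = g^2 * (b^2 * x3)" using eq unfolding x0 x1 by (simp add: power_mult_distrib algebra_simps)
    thus ?thesis using gp by simp
  qed
  obtain u where u: "x2 = u * b^2" "x3 = u * a^2"
  proof (cases "b = 0")
    case True
    hence "\<bar>a\<bar> = 1" using cab by simp
    hence "a^2 = 1" by (metis abs_power2 power2_abs power_one)
    hence "x2 = 0 * b^2" "x3 = x3 * a^2" using eq2 True by simp_all
    thus thesis using that[of x3] True by simp
  next
    case False
    have "b^2 dvd a^2 * x2" using eq2 by simp
    moreover have "coprime (b^2) (a^2)" using cab by (simp add: coprime_commute)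
    ultimately have "b^2 dvd x2" by (simp add: coprime_dvd_mult_right_iff)
    then obtain u where u: "x2 = b^2 * u" by (auto elim: dvdE)
    hence "b^2 * (u * a^2) = b^2 * x3" using eq2 by (simp add: algebra_simps)
    hence "x3 = u * a^2" using False by simp
    thus thesis using that[of u] u by (simp add: mult.commute)
  qed
  have cgu: "coprime g u"
  proof (rule coprimeI)
    fix c assume c: "c dvd g" "c dvd u"
    have "c dvd x0" "c dvd x1" "c dvd x2" "c dvd x3" using c unfolding x0 x1 u by auto
    hence "c dvd gcd x0 (gcd x1 (gcd x2 x3))" by simp
    thus "is_unit c" using prim by simp
  qed
  have "((a,b),(g,u)) \<in> Dom" using cab gp cgu by (simp add: Dom_def)
  moreover have "v = phi ((a,b),(g,u))" using vd x0 x1 u by (simp add: phi_def mult.commute)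
  ultimately show ?thesis by (rule rev_image_eqI)
qed

lemma phi_image: "phi ` Dom = Vvec"
  using phi_in phi_surj by (auto simp: Dom_def)

definition ht :: "(int \<times> int) \<times> (int \<times> int) \<Rightarrow> int" where
  "ht x = (case x of ((a,b),(g,u)) \<Rightarrow> max (g * hab (a,b)) (\<bar>u\<bar> * hab (a,b)^2))"

lemma hgt4_phi:
  assumes "((a,b),(g,u)) \<in> Dom"
  shows "hgt4 (phi ((a,b),(g,u))) = real_of_int (ht ((a,b),(g,u)))"
proof -
  have g: "g \<ge> 1" using assms by (simp add: Dom_def)
  have m1: "max \<bar>g*a\<bar> \<bar>g*b\<bar> = g * max \<bar>a\<bar> \<bar>b\<bar>"
    using g by (simp add: abs_mult max_def mult_le_cancel_left)
  have m2: "max \<bar>u*b^2\<bar> \<bar>u*a^2\<bar> = \<bar>u\<bar> * (max \<bar>a\<bar> \<bar>b\<bar>)^2"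
  proof (cases "\<bar>a\<bar> \<le> \<bar>b\<bar>")
    case True
    hence "a^2 \<le> b^2" by (simp add: abs_le_square_iff)
    hence "\<bar>u\<bar> * a^2 \<le> \<bar>u\<bar> * b^2" by (simp add: mult_left_mono)
    thus ?thesis using True by (simp add: abs_mult max_def)
  next
    case False
    hence "b^2 \<le> a^2" by (simp add: abs_le_square_iff)
    hence "\<bar>u\<bar> * b^2 \<le> \<bar>u\<bar> * a^2" by (simp add: mult_left_mono)
    thus ?thesis using False by (simp add: abs_mult max_def)
  qed
  show ?thesis unfolding phi_def hgt4_def ht_def hab_def using m1 m2 by simp
qed

lemma hgt4_phi': "x \<in> Dom \<Longrightarrow> hgt4 (phi x) = real_of_int (ht x)"
  by (metis hgt4_phi prod.collapse)

lemma Dom_le_eq: "{x \<in> Dom. ht x \<le> int n} = Sigma (CPle n) (\<lambda>ab. Fib n (nat (hab ab)))"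
proof (intro equalityI subsetI)
  fix x assume x: "x \<in> {x \<in> Dom. ht x \<le> int n}"
  obtain a b g u where xd: "x = ((a,b),(g,u))" by (metis prod.collapse)
  have c: "coprime a b" "g \<ge> 1" "coprime g u" "max (g * hab (a,b)) (\<bar>u\<bar> * hab (a,b)^2) \<le> int n"
    using x xd by (auto simp: Dom_def ht_def)
  have h1: "hab (a,b) \<ge> 1" using hab_pos[of "(a,b)"] c(1) by simp
  have "hab (a,b) \<le> g * hab (a,b)" using c(2) h1 by simp
  hence hn: "hab (a,b) \<le> int n" using c(4) by linarith
  have "(a,b) \<in> CPle n" using c(1) hn by (simp add: CPle_def)
  moreover have "(g,u) \<in> Fib n (nat (hab (a,b)))" using c h1 by (simp add: Fib_def)
  ultimately show "x \<in> Sigma (CPle n) (\<lambda>ab. Fib n (nat (hab ab)))" using xd by simp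
next
  fix x assume x: "x \<in> Sigma (CPle n) (\<lambda>ab. Fib n (nat (hab ab)))"
  obtain a b g u where xd: "x = ((a,b),(g,u))" by (metis prod.collapse)
  have c: "coprime a b" "(g,u) \<in> Fib n (nat (hab (a,b)))" using x xd by (auto simp: CPle_def)
  have h1: "hab (a,b) \<ge> 1" using hab_pos[of "(a,b)"] c(1) by simp
  show "x \<in> {x \<in> Dom. ht x \<le> int n}" using c h1 xd by (simp add: Fib_def Dom_def ht_def)
qed

lemma Vvec_le_eq: "{v \<in> Vvec. hgt4 v \<le> real n} = phi ` {x \<in> Dom. ht x \<le> int n}"
proof (intro equalityI subsetI)
  fix v assume v: "v \<in> {v \<in> Vvec. hgt4 v \<le> real n}"
  then obtain x where x: "x \<in> Dom" "v = phi x" using phi_image by blast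
  have "ht x \<le> int n" using v x hgt4_phi'[OF x(1)] by simp
  thus "v \<in> phi ` {x \<in> Dom. ht x \<le> int n}" using x by blast
next
  fix v assume "v \<in> phi ` {x \<in> Dom. ht x \<le> int n}"
  then obtain x where x: "x \<in> Dom" "ht x \<le> int n" "v = phi x" by blast
  have "v \<in> Vvec" using x phi_image by blast
  moreover have "hgt4 v \<le> real n" using x hgt4_phi'[OF x(1)] by simp
  ultimately show "v \<in> {v \<in> Vvec. hgt4 v \<le> real n}" by simp
qed

lemma Vcount:
  "card {v \<in> Vvec. hgt4 v \<le> real n} = (\<Sum>k=1..n. w k * (1 + 2 * Qc (n div k) (n div k^2)))"
    and Vfin: "finite {v \<in> Vvec. hgt4 v \<le> real n}"
proof -
  have fibfin: "finite (Fib n (nat (hab ab)))" if ab: "ab \<in> CPle n" for ab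
  proof -
    have "hab ab \<ge> 1" "hab ab \<le> int n" using ab hab_pos by (auto simp: CPle_def)
    thus "finite (Fib n (nat (hab ab)))" by (intro finite_Fib) auto
  qed
  have finS: "finite (Sigma (CPle n) (\<lambda>ab. Fib n (nat (hab ab))))"
    by (rule finite_SigmaI) (simp_all add: finite_CPle fibfin)
  have "card {v \<in> Vvec. hgt4 v \<le> real n} = card {x \<in> Dom. ht x \<le> int n}"
    unfolding Vvec_le_eq by (rule card_image) (rule inj_on_subset[OF phi_inj], auto)
  also have "\<dots> = (\<Sum>ab\<in>CPle n. card (Fib n (nat (hab ab))))"
    unfolding Dom_le_eq by (rule card_SigmaI) (simp_all add: finite_CPle fibfin)
  also have "\<dots> = (\<Sum>ab\<in>CPle n. 1 + 2 * Qc (n div nat (hab ab)) (n div nat (hab ab) ^ 2))"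
  proof (intro sum.cong refl)
    fix ab assume ab: "ab \<in> CPle n"
    have "hab ab \<ge> 1" "hab ab \<le> int n" using ab hab_pos by (auto simp: CPle_def)
    thus "card (Fib n (nat (hab ab))) = 1 + 2 * Qc (n div nat (hab ab)) (n div nat (hab ab) ^ 2)"
      by (intro Fib_card) auto
  qed
  also have "\<dots> = (\<Sum>k\<in>{1..n}. \<Sum>ab\<in>{ab \<in> CPle n. nat (hab ab) = k}. 1 + 2 * Qc (n div nat (hab ab)) (n div nat (hab ab) ^ 2))"
  proof (rule sum.group[symmetric])
    show "finite (CPle n)" by (rule finite_CPle)
    show "finite {1..n}" by simp
    show "(\<lambda>ab. nat (hab ab)) ` CPle n \<subseteq> {1..n}"
    proof
      fix k assume "k \<in> (\<lambda>ab. nat (hab ab)) ` CPle n"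
      then obtain ab where ab: "ab \<in> CPle n" "k = nat (hab ab)" by blast
      have "hab ab \<ge> 1" "hab ab \<le> int n" using ab hab_pos by (auto simp: CPle_def)
      thus "k \<in> {1..n}" using ab by auto
    qed
  qed
  also have "\<dots> = (\<Sum>k=1..n. w k * (1 + 2 * Qc (n div k) (n div k^2)))"
  proof (intro sum.cong refl)
    fix k assume k: "k \<in> {1..n}"
    have "{ab \<in> CPle n. nat (hab ab) = k} = CPk k"
      using k hab_pos by (auto simp: CPle_def CPk_def)
    thus "(\<Sum>ab\<in>{ab \<in> CPle n. nat (hab ab) = k}. 1 + 2 * Qc (n div nat (hab ab)) (n div nat (hab ab) ^ 2))
        = w k * (1 + 2 * Qc (n div k) (n div k^2))"
      by (simp add: w_def CPk_def)
  qed
  finally show "card {v \<in> Vvec. hgt4 v \<le> real n} = (\<Sum>k=1..n. w k * (1 + 2 * Qc (n div k) (n div k^2)))" .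
  show "finite {v \<in> Vvec. hgt4 v \<le> real n}" unfolding Vvec_le_eq Dom_le_eq using finS by simp
qed

lemma neg4_neg4 [simp]: "neg4 (neg4 v) = v"
  by (simp add: neg4_def split: prod.splits)

lemma hgt4_neg4 [simp]: "hgt4 (neg4 v) = hgt4 v"
  by (simp add: neg4_def hgt4_def split: prod.splits)

lemma neg4_Vvec: "v \<in> Vvec \<Longrightarrow> neg4 v \<in> Vvec"
  by (auto simp: neg4_def Vvec_def primitive4_def split: prod.splits)

lemma neg4_ne: "v \<in> Vvec \<Longrightarrow> neg4 v \<noteq> v"
  by (auto simp: neg4_def Vvec_def split: prod.splits)

lemma H3_class [simp]: "H3 {v, neg4 v} = hgt4 v"
  by (simp add: H3_def)

lemma VQ_eq: "V_Q = {{v, neg4 v} | v. v \<in> Vvec}"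
  by (simp add: V_Q_def Vvec_def)

lemma VQ_count:
  "2 * card {P \<in> V_Q. H3 P \<le> real n} = card {v \<in> Vvec. hgt4 v \<le> real n}"
    and VQ_fin: "finite {P \<in> V_Q. H3 P \<le> real n}"
proof -
  define X where "X = {v \<in> Vvec. hgt4 v \<le> real n}"
  have eq: "{P \<in> V_Q. H3 P \<le> real n} = {{v, neg4 v} | v. v \<in> X}"
  proof (intro equalityI subsetI)
    fix P assume "P \<in> {P \<in> V_Q. H3 P \<le> real n}"
    then obtain v where v: "P = {v, neg4 v}" "v \<in> Vvec" "H3 P \<le> real n" unfolding VQ_eq by blast
    hence "v \<in> X" by (simp add: X_def)
    thus "P \<in> {{v, neg4 v} | v. v \<in> X}" using v(1) by blast
  next
    fix P assume "P \<in> {{v, neg4 v} | v. v \<in> X}"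
    then obtain v where v: "P = {v, neg4 v}" "v \<in> X" by blast
    hence "hgt4 v \<le> real n" "v \<in> Vvec" by (simp_all add: X_def)
    moreover have "P \<in> V_Q" unfolding VQ_eq using v(1) \<open>v \<in> Vvec\<close> by blast
    ultimately show "P \<in> {P \<in> V_Q. H3 P \<le> real n}" using v(1) by simp
  qed
  have "2 * card {{v, neg4 v} | v. v \<in> X} = card X"
    by (rule card_classes) (use Vfin[of n] in \<open>auto simp: X_def neg4_Vvec neg4_ne\<close>)
  thus "2 * card {P \<in> V_Q. H3 P \<le> real n} = card {v \<in> Vvec. hgt4 v \<le> real n}"
    unfolding eq X_def .
  have "{{v, neg4 v} | v. v \<in> X} = (\<lambda>v. {v, neg4 v}) ` X" by auto
  thus "finite {P \<in> V_Q. H3 P \<le> real n}" unfolding eq using Vfin[of n] by (simp add: X_def)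
qed



lemma infsum_graded:
  fixes f :: "'a \<Rightarrow> real" and gr :: "'a \<Rightarrow> nat"
  assumes nn: "\<And>x. x \<in> S \<Longrightarrow> f x \<ge> 0" and fin: "\<And>k. finite {x\<in>S. gr x = k}"
    and sm: "summable (\<lambda>k. \<Sum>x\<in>{x\<in>S. gr x = k}. f x)"
  shows "infsum f S = (\<Sum>k. \<Sum>x\<in>{x\<in>S. gr x = k}. f x)"
proof -
  define B where "B k = {x\<in>S. gr x = k}" for k
  define G where "G k = sum f (B k)" for k
  have SU: "S = (\<Union>k\<in>UNIV. B k)" by (auto simp: B_def)
  have hs: "(f has_sum G k) (B k)" for k using fin[of k] by (simp add: G_def B_def)
  have Gnn: "G k \<ge> 0" for k unfolding G_def B_def by (intro sum_nonneg nn) auto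
  have smG: "summable G" using sm unfolding G_def B_def .
  have Gs: "G summable_on UNIV" by (rule summable_nonneg_imp_summable_on[OF smG Gnn])
  have disj: "disjoint_family_on B UNIV" by (auto simp: disjoint_family_on_def B_def)
  have fs: "f summable_on (\<Union>k\<in>UNIV. B k)"
    by (rule summable_on_UnionI[OF hs Gs _ disj]) (auto simp: B_def nn)
  have inj: "inj_on snd (Sigma UNIV B)"
  proof (rule inj_onI)
    fix p q assume p: "p \<in> Sigma UNIV B" and q: "q \<in> Sigma UNIV B" and e: "snd p = snd q"
    have "fst p = gr (snd p)" using p by (auto simp: B_def)
    moreover have "fst q = gr (snd q)" using q by (auto simp: B_def)
    ultimately show "p = q" using e by (simp add: prod_eq_iff)
  qed
  have im: "snd ` Sigma UNIV B = (\<Union>k\<in>UNIV. B k)"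
  proof (intro equalityI subsetI)
    fix x assume "x \<in> snd ` Sigma UNIV B" thus "x \<in> (\<Union>k\<in>UNIV. B k)" by auto
  next
    fix x assume "x \<in> (\<Union>k\<in>UNIV. B k)" then obtain k where "x \<in> B k" by auto
    hence "(k, x) \<in> Sigma UNIV B" by simp
    thus "x \<in> snd ` Sigma UNIV B" by (rule rev_image_eqI) simp
  qed
  have "f summable_on (snd ` Sigma UNIV B)" unfolding im by (rule fs)
  hence fs2: "(f \<circ> snd) summable_on (Sigma UNIV B)" by (simp only: summable_on_reindex[OF inj])
  have "infsum f S = infsum f (snd ` Sigma UNIV B)" unfolding im using SU by (simp only:)
  also have "\<dots> = infsum (f \<circ> snd) (Sigma UNIV B)" by (rule infsum_reindex[OF inj])
  also have "\<dots> = (\<Sum>\<^sub>\<infinity>k\<in>UNIV. \<Sum>\<^sub>\<infinity>y\<in>B k. (f \<circ> snd) (k, y))"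
    by (rule infsum_Sigma_banach[OF fs2, symmetric])
  also have "\<dots> = (\<Sum>\<^sub>\<infinity>k\<in>UNIV. G k)"
  proof -
    have "(\<Sum>\<^sub>\<infinity>y\<in>B k. (f \<circ> snd) (k, y)) = G k" for k
      using fin[of k] by (simp add: G_def B_def)
    thus ?thesis by simp
  qed
  also have "\<dots> = suminf G"
  proof (rule infsumI)
    show "(G has_sum suminf G) UNIV"
      by (rule sums_nonneg_imp_has_sum[OF summable_sums[OF smG] Gnn])
  qed
  finally show ?thesis unfolding G_def B_def .
qed

definition negp :: "int \<times> int \<Rightarrow> int \<times> int" where "negp x = (- fst x, - snd x)"

lemma P1_eq: "P1_Q = {{x, negp x} | x. coprime (fst x) (snd x)}"
proof (intro equalityI subsetI)
  fix P assume "P \<in> P1_Q"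
  then obtain a b where ab: "P = {(a,b),(-a,-b)}" "coprime a b" unfolding P1_Q_def by blast
  have "P = {(a,b), negp (a,b)}" using ab by (simp add: negp_def)
  thus "P \<in> {{x, negp x} | x. coprime (fst x) (snd x)}"
    using ab(2) by (intro CollectI exI[of _ "(a,b)"]) simp
next
  fix P assume "P \<in> {{x, negp x} | x. coprime (fst x) (snd x)}"
  then obtain x where x: "P = {x, negp x}" "coprime (fst x) (snd x)" by blast
  obtain a b where xab: "x = (a,b)" by (cases x)
  have "P = {(a,b),(-a,-b)}" "coprime a b" using x xab by (simp_all add: negp_def)
  thus "P \<in> P1_Q" unfolding P1_Q_def by blast
qed

lemma H1_class: "H1 {x, negp x} = real_of_int (hab x)"
proof -
  obtain a b where x: "x = (a,b)" by (cases x)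
  show ?thesis by (simp add: x H1_def negp_def hab_def)
qed

lemma P1_fiber: "{P \<in> P1_Q. nat \<lfloor>H1 P\<rfloor> = k} = {{x, negp x} | x. x \<in> CPk k}"
proof (intro equalityI subsetI)
  fix P assume "P \<in> {P \<in> P1_Q. nat \<lfloor>H1 P\<rfloor> = k}"
  then obtain x where x: "P = {x, negp x}" "coprime (fst x) (snd x)" "nat \<lfloor>H1 P\<rfloor> = k"
    unfolding P1_eq by blast
  have "hab x \<ge> 1" using hab_pos x(2) by blast
  hence "hab x = int k" using x by (simp add: H1_class)
  hence "x \<in> CPk k" using x(2) by (simp add: CPk_def)
  thus "P \<in> {{x, negp x} | x. x \<in> CPk k}" using x(1) by blast
next
  fix P assume "P \<in> {{x, negp x} | x. x \<in> CPk k}"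
  then obtain x where x: "P = {x, negp x}" "x \<in> CPk k" by blast
  have c: "coprime (fst x) (snd x)" "hab x = int k" using x(2) by (auto simp: CPk_def)
  have "P \<in> P1_Q" unfolding P1_eq using x(1) c(1) by blast
  moreover have "nat \<lfloor>H1 P\<rfloor> = k" using x(1) c(2) by (simp add: H1_class)
  ultimately show "P \<in> {P \<in> P1_Q. nat \<lfloor>H1 P\<rfloor> = k}" by simp
qed

lemma P1_fiber_card: "2 * card {P \<in> P1_Q. nat \<lfloor>H1 P\<rfloor> = k} = w k"
  and P1_fiber_fin: "finite {P \<in> P1_Q. nat \<lfloor>H1 P\<rfloor> = k}"
proof -
  have "2 * card {{x, negp x} | x. x \<in> CPk k} = card (CPk k)"
  proof (rule card_classes[OF finite_CPk])
    fix x assume x: "x \<in> CPk k"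
    show "negp x \<in> CPk k" using x by (simp add: CPk_def negp_def hab_def)
    show "negp (negp x) = x" by (simp add: negp_def)
    have "\<not> (fst x = 0 \<and> snd x = 0)" using x by (auto simp: CPk_def)
    thus "negp x \<noteq> x" by (auto simp: negp_def prod_eq_iff)
  qed
  thus "2 * card {P \<in> P1_Q. nat \<lfloor>H1 P\<rfloor> = k} = w k" unfolding P1_fiber w_def .
  have "{{x, negp x} | x. x \<in> CPk k} = (\<lambda>x. {x, negp x}) ` CPk k" by auto
  thus "finite {P \<in> P1_Q. nat \<lfloor>H1 P\<rfloor> = k}" unfolding P1_fiber using finite_CPk by simp
qed

lemma P1_fiber_H1: "P \<in> {P \<in> P1_Q. nat \<lfloor>H1 P\<rfloor> = k} \<Longrightarrow> H1 P = real k"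
proof -
  assume "P \<in> {P \<in> P1_Q. nat \<lfloor>H1 P\<rfloor> = k}"
  then obtain x where x: "P = {x, negp x}" "x \<in> CPk k" unfolding P1_fiber by blast
  thus ?thesis by (simp add: H1_class CPk_def)
qed

lemma w_0: "w 0 = 0"
proof -
  have "CPk 0 = {}"
  proof (intro equalityI subsetI)
    fix x assume x: "x \<in> CPk 0"
    hence "coprime (fst x) (snd x)" "hab x = 0" by (auto simp: CPk_def)
    thus "x \<in> {}" using hab_pos[of x] by simp
  qed simp
  thus ?thesis by (simp add: w_def)
qed

lemma cube_aux: "(x::real) > 0 \<Longrightarrow> 12 * x / x ^ 3 = 12 * (1 / x ^ 2)"
  by (simp add: power3_eq_cube power2_eq_square field_simps)

lemma cube_aux2: "(x::real) > 0 \<Longrightarrow> (12 * x) * ((1 / x) * (1 / x ^ 2)) = 12 * (1 / x ^ 2)"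
  by (simp add: field_simps power2_eq_square)

lemma summable_w3: "summable (\<lambda>k. real (w (Suc k)) / real (Suc k) ^ 3)"
proof (rule summable_comparison_test')
  show "summable (\<lambda>k. 12 * (1 / real (Suc k) ^ 2))" by (intro summable_mult summable_inv_sq)
  fix k :: nat
  have "real (w (Suc k)) \<le> 12 * real (Suc k)" using w_le[of "Suc k"] by simp
  hence "real (w (Suc k)) / real (Suc k) ^ 3 \<le> 12 * real (Suc k) / real (Suc k) ^ 3"
    by (intro divide_right_mono) auto
  also have "\<dots> = 12 * (1 / real (Suc k) ^ 2)" by (rule cube_aux) simp
  finally show "norm (real (w (Suc k)) / real (Suc k) ^ 3) \<le> 12 * (1 / real (Suc k) ^ 2)" by simp
qed

definition W3 :: real where "W3 = (\<Sum>k. real (w (Suc k)) / real (Suc k) ^ 3)"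

lemma Z3_eq: "Z_P1 3 = W3 / 2"
proof -
  define F where "F k = {P \<in> P1_Q. nat \<lfloor>H1 P\<rfloor> = k}" for k
  have fs: "(\<Sum>P\<in>F k. H1 P powr (-3)) = real (w k) / 2 / real k ^ 3" for k
  proof -
    have "(\<Sum>P\<in>F k. H1 P powr (-3)) = (\<Sum>P\<in>F k. real k powr (-3))"
    proof (intro sum.cong refl)
      fix P assume "P \<in> F k"
      hence "H1 P = real k" unfolding F_def by (rule P1_fiber_H1)
      thus "H1 P powr (-3) = real k powr (-3)" by simp
    qed
    also have "\<dots> = real (card (F k)) * real k powr (-3)" by simp
    also have "real (card (F k)) = real (w k) / 2" using P1_fiber_card[of k] by (simp add: F_def)
    also have "real k powr (-3) = 1 / real k ^ 3"
      by (cases "k = 0") (simp_all add: powr_minus powr_realpow divide_inverse)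
    finally show ?thesis by simp
  qed
  have sm: "summable (\<lambda>k. real (w k) / 2 / real k ^ 3)"
  proof -
    have "summable (\<lambda>k. (real (w (Suc k)) / real (Suc k) ^ 3) / 2)" by (intro summable_divide summable_w3)
    hence "summable (\<lambda>k. real (w (Suc k)) / 2 / real (Suc k) ^ 3)" by (simp add: mult.commute)
    thus ?thesis by (subst (asm) summable_Suc_iff)
  qed
  have "Z_P1 3 = (\<Sum>k. \<Sum>P\<in>F k. H1 P powr (-3))"
    unfolding Z_P1_def F_def
  proof (rule infsum_graded)
    show "summable (\<lambda>k. \<Sum>x\<in>{x \<in> P1_Q. nat \<lfloor>H1 x\<rfloor> = k}. H1 x powr - 3)"
      using sm fs by (simp add: F_def)
  qed (simp_all add: P1_fiber_fin)
  also have "\<dots> = (\<Sum>k. real (w k) / 2 / real k ^ 3)" by (simp add: fs)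
  also have "\<dots> = (\<Sum>k. real (w (Suc k)) / 2 / real (Suc k) ^ 3)"
    using suminf_split_head[OF sm] by (simp add: w_0)
  also have "\<dots> = (\<Sum>k. (real (w (Suc k)) / real (Suc k) ^ 3) / 2)" by (simp add: mult.commute)
  also have "\<dots> = W3 / 2" unfolding W3_def by (rule suminf_divide[OF summable_w3])
  finally show ?thesis .
qed

lemma AV_formula:
  assumes n: "n \<ge> 1"
  shows "2 * real (card {P \<in> V_Q. H3 P \<le> real n}) =
         4 + 4 * real (Qc n n) + 2 * (\<Sum>k=1..n. real (w k) * real (Qc (n div k) (n div k^2)))"
proof -
  have "2 * card {P \<in> V_Q. H3 P \<le> real n} = (\<Sum>k=1..n. w k * (1 + 2 * Qc (n div k) (n div k^2)))"
    using VQ_count Vcount by simp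
  also have "\<dots> = (\<Sum>k=1..n. w k) + 2 * (\<Sum>k=1..n. w k * Qc (n div k) (n div k^2))"
    by (simp add: sum.distrib sum_distrib_left algebra_simps)
  also have "(\<Sum>k=1..n. w k) = 4 + 4 * Qc n n" using CPle_sum[of n] CPle_card[OF n] by simp
  finally have "2 * card {P \<in> V_Q. H3 P \<le> real n} = 4 + 4 * Qc n n + 2 * (\<Sum>k=1..n. w k * Qc (n div k) (n div k^2))" .
  hence "real (2 * card {P \<in> V_Q. H3 P \<le> real n}) = real (4 + 4 * Qc n n + 2 * (\<Sum>k=1..n. w k * Qc (n div k) (n div k^2)))"
    by (simp only:)
  thus ?thesis by simp
qed

lemma AV_lim:
  "(\<lambda>n. real (card {P \<in> V_Q. H3 P \<le> real n}) / real n ^ 2) \<longlonglongrightarrow> c_V"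
proof -
  define e where "e k n = real (w (Suc k)) * real (Qc (n div Suc k) (n div (Suc k)^2)) / real n ^ 2" for k n
  have sum_eq: "(\<Sum>k=1..n. real (w k) * real (Qc (n div k) (n div k^2))) / real n ^ 2 = (\<Sum>k. e k n)" for n
  proof -
    have "(\<Sum>k=1..n. real (w k) * real (Qc (n div k) (n div k^2))) / real n ^ 2 = (\<Sum>k<n. e k n)"
      unfolding sum_shift1 e_def by (simp add: sum_divide_distrib)
    also have "\<dots> = (\<Sum>k. e k n)"
    proof (rule suminf_finite[symmetric])
      fix k assume "k \<notin> {..<n}"
      hence "n div Suc k = 0" by simp
      thus "e k n = 0" by (simp add: e_def)
    qed simp
    finally show ?thesis .
  qed
  have lim: "(\<lambda>n. e k n) \<longlonglongrightarrow> real (w (Suc k)) * (1 / (zeta2 * real (Suc k) * real ((Suc k)^2)))" for k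
  proof -
    have "(\<lambda>n. real (w (Suc k)) * (real (Qc (n div Suc k) (n div (Suc k)^2)) / real n ^ 2))
        \<longlonglongrightarrow> real (w (Suc k)) * (1 / (zeta2 * real (Suc k) * real ((Suc k)^2)))"
      by (intro tendsto_mult tendsto_const Q_lim) auto
    thus ?thesis by (simp add: e_def)
  qed
  have bnd: "\<forall>\<^sub>F (k, n) in sequentially \<times>\<^sub>F sequentially. norm (e k n) \<le> 12 * (1 / real (Suc k) ^ 2)"
  proof (intro always_eventually allI, clarify)
    fix k n
    have r1: "real (n div Suc k) / real n \<le> 1 / real (Suc k)" by (rule div_ratio_bounds) simp
    have r2: "real (n div (Suc k)^2) / real n \<le> 1 / real ((Suc k)^2)" by (rule div_ratio_bounds) simp
    have q: "real (Qc (n div Suc k) (n div (Suc k)^2)) \<le> real (n div Suc k) * real (n div (Suc k)^2)"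
      using Qc_le[of "n div Suc k" "n div (Suc k)^2"] by (simp only: of_nat_le_iff of_nat_mult[symmetric])
    have "norm (e k n) = real (w (Suc k)) * (real (Qc (n div Suc k) (n div (Suc k)^2)) / real n ^ 2)"
      by (simp add: e_def)
    also have "\<dots> \<le> real (w (Suc k)) * ((real (n div Suc k) / real n) * (real (n div (Suc k)^2) / real n))"
    proof (intro mult_left_mono)
      have "real (Qc (n div Suc k) (n div (Suc k)^2)) / real n ^ 2 \<le> real (n div Suc k) * real (n div (Suc k)^2) / real n ^ 2"
        using q by (intro divide_right_mono) auto
      thus "real (Qc (n div Suc k) (n div (Suc k)^2)) / real n ^ 2 \<le> (real (n div Suc k) / real n) * (real (n div (Suc k)^2) / real n)"
        by (simp add: power2_eq_square)
    qed simp
    also have "\<dots> \<le> real (w (Suc k)) * ((1 / real (Suc k)) * (1 / real ((Suc k)^2)))"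
      using r1 r2 by (intro mult_left_mono mult_mono) auto
    also have "\<dots> \<le> (12 * real (Suc k)) * ((1 / real (Suc k)) * (1 / real ((Suc k)^2)))"
    proof (intro mult_right_mono)
      show "real (w (Suc k)) \<le> 12 * real (Suc k)" using w_le[of "Suc k"] by simp
    qed simp
    also have "\<dots> = 12 * (1 / real (Suc k) ^ 2)" unfolding of_nat_power by (rule cube_aux2) simp
    finally show "norm (e k n) \<le> 12 * (1 / real (Suc k) ^ 2)" .
  qed
  have sM: "summable (\<lambda>k. 12 * (1 / real (Suc k) ^ 2))" by (intro summable_mult summable_inv_sq)
  have T: "(\<forall>\<^sub>F n in sequentially. summable (\<lambda>k. norm (e k n))) \<and>
      summable (\<lambda>k. norm (real (w (Suc k)) * (1 / (zeta2 * real (Suc k) * real ((Suc k)^2))))) \<and>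
      ((\<lambda>n. \<Sum>k. e k n) \<longlonglongrightarrow> (\<Sum>k. real (w (Suc k)) * (1 / (zeta2 * real (Suc k) * real ((Suc k)^2)))))"
    by (rule tannerys_theorem[OF lim bnd sM]) simp
  have z: "zeta2 > 0" by (rule zeta2_pos)
  have "(\<Sum>k. real (w (Suc k)) * (1 / (zeta2 * real (Suc k) * real ((Suc k)^2)))) = (\<Sum>k. (real (w (Suc k)) / real (Suc k) ^ 3) / zeta2)"
  proof (intro suminf_cong)
    fix k
    have "real (Suc k) > 0" by simp
    thus "real (w (Suc k)) * (1 / (zeta2 * real (Suc k) * real ((Suc k)^2))) = (real (w (Suc k)) / real (Suc k) ^ 3) / zeta2"
      using z by (simp add: power3_eq_cube power2_eq_square field_simps)
  qed
  also have "\<dots> = W3 / zeta2" unfolding W3_def by (rule suminf_divide[OF summable_w3])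
  finally have T2: "(\<lambda>n. \<Sum>k. e k n) \<longlonglongrightarrow> W3 / zeta2" using T by simp
  have Q1: "(\<lambda>n. real (Qc n n) / real n ^ 2) \<longlonglongrightarrow> 1 / zeta2"
    using Q_lim[of 1 1] by simp
  have L: "(\<lambda>n. 2 * inverse (real n ^ 2) + 2 * (real (Qc n n) / real n ^ 2) + (\<Sum>k. e k n))
      \<longlonglongrightarrow> 2 * 0 + 2 * (1 / zeta2) + W3 / zeta2"
    by (intro tendsto_intros Q1 T2) real_asymp
  have cV: "c_V = 2 * (1 / zeta2) + W3 / zeta2"
    unfolding c_V_def c_P1_def Z3_eq using z by (simp add: field_simps)
  show ?thesis
  proof -
    have "\<forall>\<^sub>F n in sequentially. 2 * inverse (real n ^ 2) + 2 * (real (Qc n n) / real n ^ 2) + (\<Sum>k. e k n)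
        = real (card {P \<in> V_Q. H3 P \<le> real n}) / real n ^ 2"
      using eventually_ge_at_top[of 1]
    proof eventually_elim
      case (elim n)
      have np: "real n ^ 2 > 0" using elim by simp
      have "real (card {P \<in> V_Q. H3 P \<le> real n}) / real n ^ 2
          = (2 * real (card {P \<in> V_Q. H3 P \<le> real n})) / real n ^ 2 / 2" by simp
      also have "\<dots> = (4 + 4 * real (Qc n n) + 2 * (\<Sum>k=1..n. real (w k) * real (Qc (n div k) (n div k^2)))) / real n ^ 2 / 2"
        unfolding AV_formula[OF elim] ..
      also have "\<dots> = 2 * inverse (real n ^ 2) + 2 * (real (Qc n n) / real n ^ 2) + (\<Sum>k=1..n. real (w k) * real (Qc (n div k) (n div k^2))) / real n ^ 2"
        using np by (simp add: field_simps)
      also have "\<dots> = 2 * inverse (real n ^ 2) + 2 * (real (Qc n n) / real n ^ 2) + (\<Sum>k. e k n)"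
        unfolding sum_eq ..
      finally show ?case by simp
    qed
    thus ?thesis using L cV by (simp add: tendsto_cong)
  qed
qed

lemma H3_nat:
  assumes P: "P \<in> V_Q"
  shows "H3 P = real (nat \<lfloor>H3 P\<rfloor>) \<and> nat \<lfloor>H3 P\<rfloor> \<ge> 1"
proof -
  obtain v where v: "P = {v, neg4 v}" "v \<in> Vvec" using P unfolding VQ_eq by blast
  obtain x0 x1 x2 x3 where vd: "v = (x0,x1,x2,x3)" by (metis prod.collapse)
  have nz: "\<not> (x0 = 0 \<and> x1 = 0)" using v(2) vd by (simp add: Vvec_def)
  define m where "m = max (max \<bar>x0\<bar> \<bar>x1\<bar>) (max \<bar>x2\<bar> \<bar>x3\<bar>)"
  have m1: "m \<ge> 1" using nz unfolding m_def by auto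
  have "H3 P = real_of_int m" using v vd by (simp add: hgt4_def m_def)
  thus ?thesis using m1 by simp
qed

theorem mainTheorem13:
  shows "(\<lambda>B. real (count_pairs B)) \<sim>[at_top] (\<lambda>B. 2 * c_V^2 * B^2 * ln B)"
proof -
  define f where "f P = nat \<lfloor>H3 P\<rfloor>" for P
  have Hf: "H3 P = real (f P)" if "P \<in> V_Q" for P using H3_nat[OF that] by (simp add: f_def)
  have pos: "f P \<ge> 1" if "P \<in> V_Q" for P using H3_nat[OF that] by (simp add: f_def)
  have seteq: "{x \<in> V_Q. f x \<le> n} = {P \<in> V_Q. H3 P \<le> real n}" for n
    using Hf by auto
  have fin: "finite {x \<in> V_Q. f x \<le> n}" for n unfolding seteq by (rule VQ_fin)
  have lim: "(\<lambda>n. real (card {x \<in> V_Q. f x \<le> n}) / real n ^ 2) \<longlonglongrightarrow> c_V"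
    unfolding seteq by (rule AV_lim)
  have cpos: "c_V > 0"
  proof -
    have "Z_P1 3 \<ge> 0" unfolding Z_P1_def by (intro infsum_nonneg) simp
    moreover have "c_P1 > 0" using zeta2_pos by (simp add: c_P1_def)
    ultimately show ?thesis by (simp add: c_V_def)
  qed
  have main: "(\<lambda>B. real (card {(x,y). x \<in> V_Q \<and> y \<in> V_Q \<and> real (f x) * real (f y) \<le> B})) \<sim>[at_top] (\<lambda>B. 2 * c_V^2 * B^2 * ln B)"
    by (rule pair_count[OF pos fin lim cpos])
  have "{(x,y). x \<in> V_Q \<and> y \<in> V_Q \<and> real (f x) * real (f y) \<le> B} = {(P, Q). P \<in> V_Q \<and> Q \<in> V_Q \<and> H3 P * H3 Q \<le> B}" for B
    using Hf by auto
  hence "real (count_pairs B) = real (card {(x,y). x \<in> V_Q \<and> y \<in> V_Q \<and> real (f x) * real (f y) \<le> B})" for B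
    by (simp add: count_pairs_def)
  thus ?thesis using main by simp
qed


end
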